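(* Let $(M,d)$ be a pointed metric space. The space $\mathrm{Lip}_0(M)$ has the SD2P if and only if for every $n\in\mathbb N$, all optimal $\mu_1,\dots,\mu_n\in ba(\widetilde M)$ with $\|\mu_i\|=1$, and every $\gamma\in(0,1)$, there exist subsets $A_1,\dots,A_n\subseteq\widetilde M$ and $u,v\in M$ with $u\ne v$ such that for every $i\in\{1,\dots,n\}$, $\mu_i(A_i)\ge\gamma$ and both $A_i\cup\{(u,v)\}$ and $A_i\cup\{(v,u)\}$ are $\gamma$-cyclically monotonic.
   Context: $M$ has base point $0$; $\mathrm{Lip}_0(M)$ is the real Banach space of Lipschitz $f\colon M\to\mathbb R$ with $f(0)=0$, normed by the best Lipschitz constant. A Banach space $X$ has the strong diameter 2 property (SD2P) if for all $n\in\mathbb N$, $\lambda_1,\dots,\lambda_n\ge0$ with $\sum\lambda_i=1$ and slices $S_1,\dots,S_n$ of $B_X$ (a slice is $\{x\in B_X:x^*(x)>1-\alpha\}$ with $\|x^*\|=1$, $\alpha>0$), the set $\sum_i\lambda_iS_i$ has diameter $2$. $\widetilde M=\{(x,y)\in M\times M:x\ne y\}$. $ba(\widetilde M)$ is the Banach space of bounded finitely additive signed measures on the power set of $\widetilde M$ with norm $|\mu|(\widetilde M)$. $\Phi f(x,y)=(f(x)-f(y))/d(x,y)$ and $(\Phi^*\mu)(f)=\int_{\widetilde M}\Phi f\,d\mu$. $\mu$ is optimal if positive and $\|\Phi^*\mu\|=\|\mu\|$. For $\gamma\in(0,1]$, $A\subseteq\widetilde M$ is $\gamma$-cyclically monotonic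 if for every finite sequence $(x_1,y_1),\dots,(x_k,y_k)\in A$, with $y_{k+1}=y_1$, $\sum_{i=1}^k\min\{d(x_i,y_{i+1})-\gamma d(x_i,y_i),\,d(y_i,y_{i+1})\}\ge0$. *)

theory Defs
  imports "HOL-Analysis.Analysis"
begin

definition offdiag :: "('a \<times> 'a) set" where
  "offdiag = {(x, y). x \<noteq> y}"

section \<open>Lip_0(M) for a pointed metric space (M = UNIV of a metric_space type, base point z0)\<close>

definition Lip0 :: "'a::metric_space \<Rightarrow> ('a \<Rightarrow> real) set" where
  "Lip0 z0 = {f. f z0 = 0 \<and> (\<exists>L. \<forall>x y. \<bar>f x - f y\<bar> \<le> L * dist x y)}"

definition lipnorm :: "('a::metric_space \<Rightarrow> real) \<Rightarrow> real" where
  "lipnorm f = Sup (insert 0 {\<bar>f x - f y\<bar> / dist x y | x y. x \<noteq> y})"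

definition is_lip0_functional :: "'a::metric_space \<Rightarrow> (('a \<Rightarrow> real) \<Rightarrow> real) \<Rightarrow> bool" where
  "is_lip0_functional z0 \<phi> \<longleftrightarrow>
     (\<forall>f\<in>Lip0 z0. \<forall>g\<in>Lip0 z0. \<phi> (\<lambda>x. f x + g x) = \<phi> f + \<phi> g) \<and>
     (\<forall>c. \<forall>f\<in>Lip0 z0. \<phi> (\<lambda>x. c * f x) = c * \<phi> f) \<and>
     (\<exists>C. \<forall>f\<in>Lip0 z0. \<bar>\<phi> f\<bar> \<le> C * lipnorm f)"

definition dual_norm :: "'a::metric_space \<Rightarrow> (('a \<Rightarrow> real) \<Rightarrow> real) \<Rightarrow> real" where
  "dual_norm z0 \<phi> = Sup {\<bar>\<phi> f\<bar> | f. f \<in> Lip0 z0 \<and> lipnorm f \<le> 1}"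

definition slice :: "'a::metric_space \<Rightarrow> (('a \<Rightarrow> real) \<Rightarrow> real) \<Rightarrow> real \<Rightarrow> ('a \<Rightarrow> real) set" where
  "slice z0 \<phi> \<alpha> = {f \<in> Lip0 z0. lipnorm f \<le> 1 \<and> \<phi> f > 1 - \<alpha>}"

definition lip_diam :: "('a::metric_space \<Rightarrow> real) set \<Rightarrow> real" where
  "lip_diam S = Sup {lipnorm (\<lambda>x. g x - h x) | g h. g \<in> S \<and> h \<in> S}"

definition SD2P :: "'a::metric_space \<Rightarrow> bool" where
  "SD2P z0 \<longleftrightarrow>
     (\<forall>n::nat. n \<ge> 1 \<longrightarrow>
       (\<forall>(lam :: nat \<Rightarrow> real) (\<phi> :: nat \<Rightarrow> ('a \<Rightarrow> real) \<Rightarrow> real) (\<alpha> :: nat \<Rightarrow> real).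
          (\<forall>i\<in>{1..n}. lam i \<ge> 0) \<and> (\<Sum>i\<in>{1..n}. lam i) = 1 \<and>
          (\<forall>i\<in>{1..n}. is_lip0_functional z0 (\<phi> i) \<and> dual_norm z0 (\<phi> i) = 1 \<and> \<alpha> i > 0)
          \<longrightarrow> lip_diam {g. \<exists>f :: nat \<Rightarrow> 'a \<Rightarrow> real.
                          (\<forall>i\<in>{1..n}. f i \<in> slice z0 (\<phi> i) (\<alpha> i)) \<and>
                          g = (\<lambda>x. \<Sum>i\<in>{1..n}. lam i * f i x)} = 2))"

section \<open>ba(offdiag): bounded finitely additive signed measures on the power set\<close>

definition is_partition :: "'b set \<Rightarrow> 'b set set \<Rightarrow> bool" where
  "is_partition S P \<longleftrightarrow> finite P \<and> {} \<notin> P \<and> \<Union>P = S \<and>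
     (\<forall>A\<in>P. \<forall>B\<in>P. A \<noteq> B \<longrightarrow> A \<inter> B = {})"

definition refines :: "'b set set \<Rightarrow> 'b set set \<Rightarrow> bool" where
  "refines Q P \<longleftrightarrow> (\<forall>B\<in>Q. \<exists>C\<in>P. B \<subseteq> C)"

definition is_ba :: "(('a \<times> 'a) set \<Rightarrow> real) \<Rightarrow> bool" where
  "is_ba \<mu> \<longleftrightarrow>
     (\<forall>A B. A \<subseteq> offdiag \<and> B \<subseteq> offdiag \<and> A \<inter> B = {} \<longrightarrow> \<mu> (A \<union> B) = \<mu> A + \<mu> B) \<and>
     (\<exists>K. \<forall>P. is_partition offdiag P \<longrightarrow> (\<Sum>B\<in>P. \<bar>\<mu> B\<bar>) \<le> K)"

definition ba_norm :: "(('a \<times> 'a) set \<Rightarrow> real) \<Rightarrow> real" where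
  "ba_norm \<mu> = Sup {(\<Sum>B\<in>P. \<bar>\<mu> B\<bar>) | P. is_partition offdiag P}"

definition ba_positive :: "(('a \<times> 'a) set \<Rightarrow> real) \<Rightarrow> bool" where
  "ba_positive \<mu> \<longleftrightarrow> (\<forall>A. A \<subseteq> offdiag \<longrightarrow> \<mu> A \<ge> 0)"

text \<open>Integral of a bounded function against a bounded finitely additive measure,
  as the limit of Riemann-type sums along the net of finite partitions ordered by refinement.\<close>
definition ba_integral :: "(('a \<times> 'a) set \<Rightarrow> real) \<Rightarrow> ('a \<times> 'a \<Rightarrow> real) \<Rightarrow> real" where
  "ba_integral \<mu> g = (THE I. \<forall>\<epsilon>>0. \<exists>P. is_partition offdiag P \<and>
      (\<forall>Q t. is_partition offdiag Q \<and> refines Q P \<and> (\<forall>B\<in>Q. t B \<in> B) \<longrightarrow>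
         \<bar>(\<Sum>B\<in>Q. g (t B) * \<mu> B) - I\<bar> < \<epsilon>))"

definition Phi_star :: "(('a::metric_space \<times> 'a) set \<Rightarrow> real) \<Rightarrow> ('a \<Rightarrow> real) \<Rightarrow> real" where
  "Phi_star \<mu> f = ba_integral \<mu> (\<lambda>(x, y). (f x - f y) / dist x y)"

definition optimal :: "'a::metric_space \<Rightarrow> (('a \<times> 'a) set \<Rightarrow> real) \<Rightarrow> bool" where
  "optimal z0 \<mu> \<longleftrightarrow> ba_positive \<mu> \<and> dual_norm z0 (Phi_star \<mu>) = ba_norm \<mu>"

definition cyc_mono :: "real \<Rightarrow> ('a::metric_space \<times> 'a) set \<Rightarrow> bool" where
  "cyc_mono \<gamma> A \<longleftrightarrow>
     (\<forall>ps. ps \<noteq> [] \<and> set ps \<subseteq> A \<longrightarrow>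
        (\<Sum>i<length ps. min (dist (fst (ps ! i)) (snd (ps ! ((i + 1) mod length ps)))
                              - \<gamma> * dist (fst (ps ! i)) (snd (ps ! i)))
                             (dist (snd (ps ! i)) (snd (ps ! ((i + 1) mod length ps))))) \<ge> 0)"

end

theory Submission
  imports Defs
begin

section \<open>Lipschitz norm\<close>

lemma lipnorm_le:
  assumes "K \<ge> 0" "\<And>x y. x \<noteq> y \<Longrightarrow> \<bar>f x - f y\<bar> / dist x y \<le> K"
  shows "lipnorm f \<le> K"
  unfolding lipnorm_def by (rule cSup_least) (use assms in auto)

lemma lipnorm_bdd:
  assumes "\<And>x y. \<bar>f x - f y\<bar> \<le> L * dist x y"
  shows "bdd_above (insert 0 {\<bar>f x - f y\<bar> / dist x y | x y. x \<noteq> y})"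
proof -
  have "\<bar>f x - f y\<bar> / dist x y \<le> L" if "x \<noteq> y" for x y
    using assms[of x y] that by (simp add: divide_le_eq mult.commute)
  then show ?thesis unfolding bdd_above_def
    by (intro exI[of _ "max L 0"]) (auto simp: le_max_iff_disj)
qed

lemma lipnorm_ge:
  assumes "\<And>x y. \<bar>f x - f y\<bar> \<le> L * dist x y" "x \<noteq> y"
  shows "\<bar>f x - f y\<bar> / dist x y \<le> lipnorm f"
  unfolding lipnorm_def
  by (rule cSup_upper) (use assms lipnorm_bdd[OF assms(1)] in auto)

lemma lipnorm_nonneg:
  assumes "\<And>x y. \<bar>f x - f y\<bar> \<le> L * dist x y"
  shows "0 \<le> lipnorm f"
  unfolding lipnorm_def
  by (rule cSup_upper) (use assms lipnorm_bdd[OF assms(1)] in auto)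

lemma Lip0_lip: "f \<in> Lip0 z0 \<Longrightarrow> \<exists>L. \<forall>x y. \<bar>f x - f y\<bar> \<le> L * dist x y"
  by (simp add: Lip0_def)

lemma lip1:
  assumes "f \<in> Lip0 z0" "lipnorm f \<le> 1"
  shows "\<bar>f x - f y\<bar> \<le> dist x y"
proof (cases "x = y")
  case False
  obtain L where L: "\<forall>x y. \<bar>f x - f y\<bar> \<le> L * dist x y" using Lip0_lip[OF assms(1)] by blast
  have "\<bar>f x - f y\<bar> / dist x y \<le> lipnorm f" by (rule lipnorm_ge[of f L]) (use L False in auto)
  then have "\<bar>f x - f y\<bar> / dist x y \<le> 1" using assms(2) by linarith
  then show ?thesis using False by (simp add: divide_le_eq)
qed simp

lemma lipnorm_le_Lip:
  assumes "f \<in> Lip0 z0" "x \<noteq> y"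
  shows "\<bar>f x - f y\<bar> \<le> lipnorm f * dist x y"
proof -
  obtain L where L: "\<forall>x y. \<bar>f x - f y\<bar> \<le> L * dist x y" using Lip0_lip[OF assms(1)] by blast
  have "\<bar>f x - f y\<bar> / dist x y \<le> lipnorm f" by (rule lipnorm_ge[of f L]) (use L assms(2) in auto)
  then show ?thesis using assms(2) by (simp add: divide_le_eq)
qed

section \<open>Partitions\<close>

definition finep :: "('b \<Rightarrow> real) \<Rightarrow> real \<Rightarrow> 'b set set \<Rightarrow> bool" where
  "finep h \<delta> P \<longleftrightarrow> (\<forall>B\<in>P. \<forall>x\<in>B. \<forall>y\<in>B. \<bar>h x - h y\<bar> \<le> \<delta>)"

definition tags :: "'b set set \<Rightarrow> ('b set \<Rightarrow> 'b) \<Rightarrow> bool" where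
  "tags P t \<longleftrightarrow> (\<forall>B\<in>P. t B \<in> B)"

definition riem :: "('b set \<Rightarrow> real) \<Rightarrow> ('b \<Rightarrow> real) \<Rightarrow> 'b set set \<Rightarrow> ('b set \<Rightarrow> 'b) \<Rightarrow> real" where
  "riem \<mu> h P t = (\<Sum>B\<in>P. h (t B) * \<mu> B)"

definition cref :: "'b set set \<Rightarrow> 'b set set \<Rightarrow> 'b set set" where
  "cref P P' = {B \<inter> C | B C. B \<in> P \<and> C \<in> P' \<and> B \<inter> C \<noteq> {}}"

lemma part_tags: "is_partition S P \<Longrightarrow> tags P (\<lambda>B. SOME x. x \<in> B)"
  unfolding tags_def is_partition_def by (metis ex_in_conv someI_ex)

lemma cref_part:
  assumes "is_partition S P" "is_partition S P'"
  shows "is_partition S (cref P P')" "refines (cref P P') P" "refines (cref P P') P'"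
proof -
  have "cref P P' \<subseteq> (\<lambda>(B,C). B \<inter> C) ` (P \<times> P')" unfolding cref_def by auto
  then have fin: "finite (cref P P')"
    using assms unfolding is_partition_def by (meson finite_SigmaI finite_imageI finite_subset)
  have un: "\<Union>(cref P P') = S"
  proof
    show "\<Union>(cref P P') \<subseteq> S" using assms unfolding cref_def is_partition_def by auto
    show "S \<subseteq> \<Union>(cref P P')"
    proof
      fix x assume "x \<in> S"
      then have "x \<in> \<Union>P" "x \<in> \<Union>P'" using assms unfolding is_partition_def by simp_all
      then obtain B C where "B \<in> P" "C \<in> P'" "x \<in> B" "x \<in> C" by (meson UnionE)
      then show "x \<in> \<Union>(cref P P')" unfolding cref_def by blast
    qed
  qed
  have dj: "\<forall>A\<in>cref P P'. \<forall>B\<in>cref P P'. A \<noteq> B \<longrightarrow> A \<inter> B = {}"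
  proof (intro ballI impI)
    fix A B assume "A \<in> cref P P'" "B \<in> cref P P'" "A \<noteq> B"
    then obtain B1 C1 B2 C2 where a: "A = B1 \<inter> C1" "B1 \<in> P" "C1 \<in> P'"
      and b: "B = B2 \<inter> C2" "B2 \<in> P" "C2 \<in> P'" unfolding cref_def by blast
    show "A \<inter> B = {}"
    proof (cases "B1 = B2")
      case True
      then have "C1 \<noteq> C2" using a b \<open>A \<noteq> B\<close> by auto
      then have "C1 \<inter> C2 = {}" using assms(2) a b unfolding is_partition_def by auto
      then show ?thesis using a b by auto
    next
      case False
      then have "B1 \<inter> B2 = {}" using assms(1) a b unfolding is_partition_def by auto
      then show ?thesis using a b by auto
    qed
  qed
  have ne: "{} \<notin> cref P P'" unfolding cref_def by auto
  show "is_partition S (cref P P')" unfolding is_partition_def using fin un dj ne by blast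
  show "refines (cref P P') P" "refines (cref P P') P'" unfolding refines_def cref_def by auto
qed

lemma fine_ref: "refines Q P \<Longrightarrow> finep h \<delta> P \<Longrightarrow> finep h \<delta> Q"
proof -
  assume a: "refines Q P" "finep h \<delta> P"
  show ?thesis unfolding finep_def
  proof (intro ballI)
    fix B x y assume B: "B \<in> Q" "x \<in> B" "y \<in> B"
    then obtain C where C: "C \<in> P" "B \<subseteq> C" using a(1) unfolding refines_def by auto
    then have "x \<in> C" "y \<in> C" using B by auto
    then show "\<bar>h x - h y\<bar> \<le> \<delta>" using a(2) C(1) unfolding finep_def by blast
  qed
qed

lemma refines_trans: "refines Q P \<Longrightarrow> refines P R \<Longrightarrow> refines Q R"
proof -
  assume a: "refines Q P" "refines P R"
  show ?thesis unfolding refines_def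
  proof
    fix B assume "B \<in> Q"
    then obtain C where C: "C \<in> P" "B \<subseteq> C" using a(1) unfolding refines_def by auto
    then obtain D where "D \<in> R" "C \<subseteq> D" using a(2) unfolding refines_def by auto
    then show "\<exists>D\<in>R. B \<subseteq> D" using C by auto
  qed
qed

lemma fine_exists:
  assumes "\<forall>z\<in>S. \<bar>h z\<bar> \<le> K" "\<delta> > 0"
  shows "\<exists>P. is_partition S P \<and> finep h \<delta> P"
proof -
  define k where "k z = \<lfloor>h z / \<delta>\<rfloor>" for z
  define P where "P = (\<lambda>j. {z\<in>S. k z = j}) ` (k ` S)"
  have "k ` S \<subseteq> {\<lfloor>-K/\<delta>\<rfloor> .. \<lfloor>K/\<delta>\<rfloor>}"
  proof
    fix j assume "j \<in> k ` S"
    then obtain z where z: "z \<in> S" "j = k z" by auto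
    have "-K \<le> h z" "h z \<le> K" using assms(1) z(1) by (auto simp: abs_le_iff)
    then have "(-K)/\<delta> \<le> h z/\<delta>" "h z/\<delta> \<le> K/\<delta>"
      using assms(2) by (simp_all add: divide_right_mono le_divide_eq)
    then have "\<lfloor>(-K)/\<delta>\<rfloor> \<le> k z" "k z \<le> \<lfloor>K/\<delta>\<rfloor>" unfolding k_def by (auto intro: floor_mono)
    then show "j \<in> {\<lfloor>-K/\<delta>\<rfloor> .. \<lfloor>K/\<delta>\<rfloor>}" unfolding z by simp
  qed
  then have "finite (k ` S)" using finite_subset by blast
  then have fin: "finite P" unfolding P_def by simp
  have "is_partition S P" unfolding is_partition_def P_def using fin[unfolded P_def] by auto
  moreover have "finep h \<delta> P"
    unfolding finep_def P_def
  proof (clarsimp)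
    fix z x y assume "x \<in> S" "y \<in> S" "k x = k z" "k y = k z"
    then have "k x = k y" by simp
    then have "\<bar>h x/\<delta> - h y/\<delta>\<bar> < 1" unfolding k_def by linarith
    then have "\<bar>(h x - h y)/\<delta>\<bar> < 1" by (simp add: diff_divide_distrib)
    then have "\<bar>h x - h y\<bar> / \<delta> < 1" using assms(2) by (simp add: abs_divide)
    then show "\<bar>h x - h y\<bar> \<le> \<delta>" using assms(2) by (simp add: divide_less_eq)
  qed
  ultimately show ?thesis by blast
qed

section \<open>Positive additive set functions\<close>

definition padd :: "(('a \<times> 'a) set \<Rightarrow> real) \<Rightarrow> bool" where
  "padd \<mu> \<longleftrightarrow> (\<forall>A B. A \<subseteq> offdiag \<and> B \<subseteq> offdiag \<and> A \<inter> B = {} \<longrightarrow> \<mu> (A \<union> B) = \<mu> A + \<mu> B)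
      \<and> (\<forall>A. A \<subseteq> offdiag \<longrightarrow> \<mu> A \<ge> 0)"

lemma padd_add: "padd \<mu> \<Longrightarrow> A \<subseteq> offdiag \<Longrightarrow> B \<subseteq> offdiag \<Longrightarrow> A \<inter> B = {} \<Longrightarrow> \<mu> (A \<union> B) = \<mu> A + \<mu> B"
  unfolding padd_def by blast

lemma padd_pos: "padd \<mu> \<Longrightarrow> A \<subseteq> offdiag \<Longrightarrow> \<mu> A \<ge> 0"
  unfolding padd_def by blast

lemma padd_empty: "padd \<mu> \<Longrightarrow> \<mu> {} = 0"
  using padd_add[of \<mu> "{}" "{}"] by simp

lemma padd_union_sum:
  assumes "padd \<mu>" "finite F" "\<forall>B\<in>F. B \<subseteq> offdiag" "\<forall>A\<in>F. \<forall>B\<in>F. A \<noteq> B \<longrightarrow> A \<inter> B = {}"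
  shows "\<mu> (\<Union>F) = (\<Sum>B\<in>F. \<mu> B)"
  using assms(2,3,4)
proof (induction F rule: finite_induct)
  case empty
  then show ?case using padd_empty[OF assms(1)] by simp
next
  case (insert B F)
  have "\<forall>C\<in>F. B \<inter> C = {}" using insert.prems(2) insert.hyps(2) by (metis insertCI)
  then have "B \<inter> \<Union>F = {}" by (simp add: Int_Union)
  moreover have "\<Union>F \<subseteq> offdiag" "B \<subseteq> offdiag" using insert.prems(1) by auto
  ultimately have "\<mu> (B \<union> \<Union>F) = \<mu> B + \<mu> (\<Union>F)"
    using padd_add[OF assms(1)] by simp
  then show ?case using insert by simp
qed

lemma padd_part:
  assumes "padd \<mu>" "is_partition offdiag P"
  shows "(\<Sum>B\<in>P. \<mu> B) = \<mu> offdiag"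
proof -
  have "\<forall>B\<in>P. B \<subseteq> offdiag" "finite P" "\<Union>P = offdiag" "\<forall>A\<in>P. \<forall>B\<in>P. A \<noteq> B \<longrightarrow> A \<inter> B = {}"
    using assms(2) unfolding is_partition_def by auto
  then show ?thesis using padd_union_sum[OF assms(1), of P] by simp
qed

lemma padd_mono:
  assumes "padd \<mu>" "A \<subseteq> B" "B \<subseteq> offdiag"
  shows "\<mu> A \<le> \<mu> B"
proof -
  have "B = A \<union> (B - A)" using assms by auto
  then have "\<mu> B = \<mu> A + \<mu> (B - A)" using padd_add[OF assms(1), of A "B - A"] assms by auto
  moreover have "\<mu> (B - A) \<ge> 0" using padd_pos[OF assms(1), of "B - A"] assms by auto
  ultimately show ?thesis by simp
qed

lemma refine_close:
  assumes mu: "padd \<mu>" and P: "is_partition offdiag P" and Q: "is_partition offdiag Q"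
    and ref: "refines Q P" and fn: "finep h \<delta> P" and tP: "tags P t" and tQ: "tags Q t'"
  shows "\<bar>riem \<mu> h Q t' - riem \<mu> h P t\<bar> \<le> \<delta> * \<mu> offdiag"
proof -
  define \<pi> where "\<pi> B' = (SOME B. B \<in> P \<and> B' \<subseteq> B)" for B'
  have \<pi>: "\<pi> B' \<in> P \<and> B' \<subseteq> \<pi> B'" if "B' \<in> Q" for B'
    unfolding \<pi>_def by (rule someI_ex) (use ref that in \<open>auto simp: refines_def\<close>)
  have finP: "finite P" and finQ: "finite Q" using P Q by (auto simp: is_partition_def)
  have Qsub: "B' \<subseteq> offdiag" if "B' \<in> Q" for B' using Q that by (auto simp: is_partition_def)
  have Qne: "B' \<noteq> {}" if "B' \<in> Q" for B' using Q that by (auto simp: is_partition_def)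
  have key: "(\<Sum>B'\<in>{B'. B' \<in> Q \<and> \<pi> B' = B}. \<mu> B') = \<mu> B" if B: "B \<in> P" for B
  proof -
    have "\<Union>{B'. B' \<in> Q \<and> \<pi> B' = B} = B"
    proof
      show "\<Union>{B'. B' \<in> Q \<and> \<pi> B' = B} \<subseteq> B" using \<pi> by blast
      show "B \<subseteq> \<Union>{B'. B' \<in> Q \<and> \<pi> B' = B}"
      proof
        fix x assume x: "x \<in> B"
        then have "x \<in> offdiag" using P B by (auto simp: is_partition_def)
        then have "x \<in> \<Union>Q" using Q by (simp add: is_partition_def)
        then obtain B' where B': "B' \<in> Q" "x \<in> B'" by blast
        then have "x \<in> \<pi> B'" "\<pi> B' \<in> P" using \<pi> by auto
        then have "\<pi> B' = B" using P B x by (auto simp: is_partition_def)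
        then show "x \<in> \<Union>{B'. B' \<in> Q \<and> \<pi> B' = B}" using B' by blast
      qed
    qed
    moreover have "\<mu> (\<Union>{B'. B' \<in> Q \<and> \<pi> B' = B}) = (\<Sum>B'\<in>{B'. B' \<in> Q \<and> \<pi> B' = B}. \<mu> B')"
      by (rule padd_union_sum[OF mu]) (use finQ Qsub Q in \<open>auto simp: is_partition_def\<close>)
    ultimately show ?thesis by simp
  qed
  have "riem \<mu> h P t = (\<Sum>B\<in>P. (\<Sum>B'\<in>{B'. B' \<in> Q \<and> \<pi> B' = B}. h (t B) * \<mu> B'))"
    unfolding riem_def by (rule sum.cong) (auto simp: key sum_distrib_left[symmetric])
  also have "\<dots> = (\<Sum>B\<in>P. (\<Sum>B'\<in>{B'. B' \<in> Q \<and> \<pi> B' = B}. h (t (\<pi> B')) * \<mu> B'))"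
    by (rule sum.cong) auto
  also have "\<dots> = (\<Sum>B'\<in>Q. h (t (\<pi> B')) * \<mu> B')"
    by (rule sum.group) (use finP finQ \<pi> in auto)
  finally have eq: "riem \<mu> h P t = (\<Sum>B'\<in>Q. h (t (\<pi> B')) * \<mu> B')" .
  have "riem \<mu> h Q t' - riem \<mu> h P t = (\<Sum>B'\<in>Q. (h (t' B') - h (t (\<pi> B'))) * \<mu> B')"
    using eq unfolding riem_def by (simp add: sum_subtractf left_diff_distrib)
  also have "\<bar>\<dots>\<bar> \<le> (\<Sum>B'\<in>Q. \<bar>(h (t' B') - h (t (\<pi> B'))) * \<mu> B'\<bar>)" by (rule sum_abs)
  also have "\<dots> \<le> (\<Sum>B'\<in>Q. \<delta> * \<mu> B')"
  proof (rule sum_mono)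
    fix B' assume B': "B' \<in> Q"
    have m: "\<mu> B' \<ge> 0" using padd_pos[OF mu Qsub[OF B']] .
    have "t' B' \<in> \<pi> B'" "t (\<pi> B') \<in> \<pi> B'" using tP tQ \<pi>[OF B'] B' by (auto simp: tags_def)
    then have "\<bar>h (t' B') - h (t (\<pi> B'))\<bar> \<le> \<delta>" using fn \<pi>[OF B'] by (auto simp: finep_def)
    then show "\<bar>(h (t' B') - h (t (\<pi> B'))) * \<mu> B'\<bar> \<le> \<delta> * \<mu> B'"
      using m by (simp add: abs_mult mult_right_mono)
  qed
  also have "\<dots> = \<delta> * \<mu> offdiag" using padd_part[OF mu Q] by (simp add: sum_distrib_left[symmetric])
  finally show ?thesis .
qed

definition intprop :: "(('a \<times> 'a) set \<Rightarrow> real) \<Rightarrow> ('a \<times> 'a \<Rightarrow> real) \<Rightarrow> real \<Rightarrow> bool" where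
  "intprop \<mu> g I \<longleftrightarrow> (\<forall>\<epsilon>>0. \<exists>P. is_partition offdiag P \<and>
      (\<forall>Q t. is_partition offdiag Q \<and> refines Q P \<and> (\<forall>B\<in>Q. t B \<in> B) \<longrightarrow>
         \<bar>(\<Sum>B\<in>Q. g (t B) * \<mu> B) - I\<bar> < \<epsilon>))"

lemma ba_integral_intprop: "ba_integral \<mu> g = (THE I. intprop \<mu> g I)"
  unfolding ba_integral_def intprop_def ..

definition bddS :: "('a \<times> 'a \<Rightarrow> real) \<Rightarrow> bool" where
  "bddS h \<longleftrightarrow> (\<exists>K. \<forall>z\<in>offdiag. \<bar>h z\<bar> \<le> K)"

definition ind :: "'b set \<Rightarrow> 'b \<Rightarrow> real" where
  "ind A = (\<lambda>z. if z \<in> A then 1 else 0)"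

lemma intprop_unique:
  assumes "intprop \<mu> h I" "intprop \<mu> h J"
  shows "I = J"
proof (rule ccontr)
  assume ne: "I \<noteq> J"
  define \<epsilon> where "\<epsilon> = \<bar>I - J\<bar> / 2"
  have e: "\<epsilon> > 0" using ne unfolding \<epsilon>_def by auto
  from assms(1)[unfolded intprop_def, rule_format, OF e] obtain P1 where P1': "is_partition offdiag P1 \<and> (\<forall>Q t. is_partition offdiag Q \<and> refines Q P1 \<and> (\<forall>B\<in>Q. t B \<in> B) \<longrightarrow>
         \<bar>(\<Sum>B\<in>Q. h (t B) * \<mu> B) - I\<bar> < \<epsilon>)" ..
  note P1 = conjunct1[OF P1'] conjunct2[OF P1']
  from assms(2)[unfolded intprop_def, rule_format, OF e] obtain P2 where P2': "is_partition offdiag P2 \<and> (\<forall>Q t. is_partition offdiag Q \<and> refines Q P2 \<and> (\<forall>B\<in>Q. t B \<in> B) \<longrightarrow>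
         \<bar>(\<Sum>B\<in>Q. h (t B) * \<mu> B) - J\<bar> < \<epsilon>)" ..
  note P2 = conjunct1[OF P2'] conjunct2[OF P2']
  define Q where "Q = cref P1 P2"
  have Q: "is_partition offdiag Q" "refines Q P1" "refines Q P2"
    using cref_part[OF P1(1) P2(1)] unfolding Q_def by auto
  have t: "\<forall>B\<in>Q. (SOME x. x \<in> B) \<in> B" using part_tags[OF Q(1)] unfolding tags_def .
  define s where "s = (\<Sum>B\<in>Q. h (SOME x. x \<in> B) * \<mu> B)"
  have "\<bar>s - I\<bar> < \<epsilon>" using P1(2)[rule_format, of Q "\<lambda>B. SOME x. x \<in> B"] Q(1,2) t unfolding s_def by simp
  moreover have "\<bar>s - J\<bar> < \<epsilon>" using P2(2)[rule_format, of Q "\<lambda>B. SOME x. x \<in> B"] Q(1,3) t unfolding s_def by simp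
  moreover have "\<bar>I - J\<bar> \<le> \<bar>s - J\<bar> + \<bar>s - I\<bar>"
    using abs_triangle_ineq4[of "s - J" "s - I"] by simp
  ultimately have "\<bar>I - J\<bar> < 2 * \<epsilon>" by linarith
  moreover have "2 * \<epsilon> = \<bar>I - J\<bar>" unfolding \<epsilon>_def by simp
  ultimately show False by simp
qed

lemma mu_S_nonneg: "padd \<mu> \<Longrightarrow> \<mu> offdiag \<ge> 0"
  using padd_pos by blast

lemma integral_exists:
  assumes mu: "padd \<mu>" and h: "bddS h"
  shows "\<exists>I. intprop \<mu> h I \<and> (\<forall>\<delta> P t. \<delta> \<ge> 0 \<and> is_partition offdiag P \<and> finep h \<delta> P \<and> tags P t
            \<longrightarrow> \<bar>I - riem \<mu> h P t\<bar> \<le> \<delta> * \<mu> offdiag)"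
proof -
  obtain K where K: "\<forall>z\<in>offdiag. \<bar>h z\<bar> \<le> K" using h unfolding bddS_def by blast
  define X where "X = {riem \<mu> h P t - \<delta> * \<mu> offdiag | P t \<delta>. \<delta> \<ge> 0 \<and> is_partition offdiag P \<and> finep h \<delta> P \<and> tags P t}"
  have ub: "x \<le> riem \<mu> h P t + \<delta> * \<mu> offdiag"
    if x: "x \<in> X" and adm: "\<delta> \<ge> 0" "is_partition offdiag P" "finep h \<delta> P" "tags P t" for x P t \<delta>
  proof -
    obtain P' t' \<delta>' where x': "x = riem \<mu> h P' t' - \<delta>' * \<mu> offdiag" "\<delta>' \<ge> 0" "is_partition offdiag P'"
      "finep h \<delta>' P'" "tags P' t'" using x unfolding X_def by blast
    define Q where "Q = cref P' P"
    have Q: "is_partition offdiag Q" "refines Q P'" "refines Q P"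
      using cref_part[OF x'(3) adm(2)] unfolding Q_def by auto
    have tQ: "tags Q (\<lambda>B. SOME x. x \<in> B)" using part_tags[OF Q(1)] .
    have "\<bar>riem \<mu> h Q (\<lambda>B. SOME x. x \<in> B) - riem \<mu> h P' t'\<bar> \<le> \<delta>' * \<mu> offdiag"
      by (rule refine_close[OF mu x'(3) Q(1) Q(2) x'(4) x'(5) tQ])
    moreover have "\<bar>riem \<mu> h Q (\<lambda>B. SOME x. x \<in> B) - riem \<mu> h P t\<bar> \<le> \<delta> * \<mu> offdiag"
      by (rule refine_close[OF mu adm(2) Q(1) Q(3) adm(3) adm(4) tQ])
    ultimately show ?thesis using x'(1) by linarith
  qed
  obtain P0 where P0: "is_partition offdiag P0" "finep h 1 P0" using fine_exists[of offdiag h K 1] K by auto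
  have t0: "tags P0 (\<lambda>B. SOME x. x \<in> B)" using part_tags[OF P0(1)] .
  have "riem \<mu> h P0 (\<lambda>B. SOME x. x \<in> B) - 1 * \<mu> offdiag \<in> X" unfolding X_def mem_Collect_eq
    by (rule exI[of _ P0], rule exI[of _ "\<lambda>B. SOME x. x \<in> B"], rule exI[of _ 1]) (use P0 t0 in simp)
  then have Xne: "X \<noteq> {}" by blast
  have Xbdd: "bdd_above X" unfolding bdd_above_def using ub[OF _ _ P0 t0] by auto
  define I where "I = Sup X"
  have appr: "\<bar>I - riem \<mu> h P t\<bar> \<le> \<delta> * \<mu> offdiag"
    if adm: "\<delta> \<ge> 0" "is_partition offdiag P" "finep h \<delta> P" "tags P t" for \<delta> P t
  proof -
    have "I \<le> riem \<mu> h P t + \<delta> * \<mu> offdiag" unfolding I_def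
      by (rule cSup_least[OF Xne]) (use ub adm in blast)
    moreover have "riem \<mu> h P t - \<delta> * \<mu> offdiag \<le> I" unfolding I_def
      by (rule cSup_upper[OF _ Xbdd]) (use adm in \<open>auto simp: X_def\<close>)
    ultimately show ?thesis by linarith
  qed
  have "intprop \<mu> h I"
    unfolding intprop_def
  proof (intro allI impI)
    fix \<epsilon> :: real assume e: "\<epsilon> > 0"
    have m: "\<mu> offdiag \<ge> 0" using mu_S_nonneg[OF mu] .
    define \<delta> where "\<delta> = \<epsilon> / (\<mu> offdiag + 1)"
    have d: "\<delta> > 0" using e m unfolding \<delta>_def by auto
    have dm: "\<delta> * \<mu> offdiag < \<epsilon>"
    proof -
      have "\<delta> * \<mu> offdiag < \<delta> * (\<mu> offdiag + 1)" using d by simp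
      also have "\<dots> = \<epsilon>" unfolding \<delta>_def using m by simp
      finally show ?thesis .
    qed
    obtain P where P: "is_partition offdiag P" "finep h \<delta> P" using fine_exists[of offdiag h K \<delta>] K d by auto
    show "\<exists>P. is_partition offdiag P \<and> (\<forall>Q t. is_partition offdiag Q \<and> refines Q P \<and> (\<forall>B\<in>Q. t B \<in> B) \<longrightarrow>
         \<bar>(\<Sum>B\<in>Q. h (t B) * \<mu> B) - I\<bar> < \<epsilon>)"
    proof (intro exI conjI allI impI)
      show "is_partition offdiag P" by fact
      fix Q t assume Q: "is_partition offdiag Q \<and> refines Q P \<and> (\<forall>B\<in>Q. t B \<in> B)"
      have "\<bar>I - riem \<mu> h Q t\<bar> \<le> \<delta> * \<mu> offdiag"
        by (rule appr) (use Q d fine_ref[OF _ P(2)] in \<open>auto simp: tags_def\<close>)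
      then show "\<bar>(\<Sum>B\<in>Q. h (t B) * \<mu> B) - I\<bar> < \<epsilon>" using dm unfolding riem_def by linarith
    qed
  qed
  then show ?thesis using appr by blast
qed

lemma int_approx:
  assumes mu: "padd \<mu>" and h: "bddS h" and adm: "\<delta> \<ge> 0" "is_partition offdiag P" "finep h \<delta> P" "tags P t"
  shows "\<bar>ba_integral \<mu> h - riem \<mu> h P t\<bar> \<le> \<delta> * \<mu> offdiag"
proof -
  obtain I where I: "intprop \<mu> h I" "\<forall>\<delta> P t. \<delta> \<ge> 0 \<and> is_partition offdiag P \<and> finep h \<delta> P \<and> tags P t
            \<longrightarrow> \<bar>I - riem \<mu> h P t\<bar> \<le> \<delta> * \<mu> offdiag" using integral_exists[OF mu h] by blast
  have "ba_integral \<mu> h = I" unfolding ba_integral_intprop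
  proof (rule the_equality)
    show "intprop \<mu> h I" by (rule I(1))
  next
    fix J assume "intprop \<mu> h J"
    then show "J = I" by (rule intprop_unique[OF _ I(1)])
  qed
  then show ?thesis using I(2) adm by blast
qed

lemma le_eps_zero:
  fixes a c :: real
  assumes "\<And>\<delta>. \<delta> > 0 \<Longrightarrow> a \<le> \<delta> * c"
  shows "a \<le> 0"
proof (rule ccontr)
  assume "\<not> a \<le> 0"
  then have a: "a > 0" by simp
  define \<delta> where "\<delta> = a / (2 * \<bar>c\<bar> + 2)"
  have pos: "2 * \<bar>c\<bar> + 2 > 0" by (simp add: add_nonneg_pos)
  have d: "\<delta> > 0" using a pos unfolding \<delta>_def by simp
  have "\<delta> * c \<le> \<delta> * (\<bar>c\<bar> + 1)" using d by (intro mult_left_mono) auto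
  also have "\<dots> = a / 2" unfolding \<delta>_def using pos by (simp add: field_simps)
  finally show False using assms[OF d] a by linarith
qed

lemma int_crit:
  assumes mu: "padd \<mu>" and h: "bddS h"
    and crit: "\<And>\<delta>. \<delta> > 0 \<Longrightarrow> \<exists>P t. is_partition offdiag P \<and> finep h \<delta> P \<and> tags P t \<and> \<bar>riem \<mu> h P t - J\<bar> \<le> C * \<delta>"
  shows "ba_integral \<mu> h = J"
proof -
  have "\<bar>ba_integral \<mu> h - J\<bar> \<le> \<delta> * (\<mu> offdiag + C)" if d: "\<delta> > 0" for \<delta>
  proof -
    obtain P t where P: "is_partition offdiag P" "finep h \<delta> P" "tags P t" "\<bar>riem \<mu> h P t - J\<bar> \<le> C * \<delta>"
      using crit[OF d] by blast
    have "\<bar>ba_integral \<mu> h - riem \<mu> h P t\<bar> \<le> \<delta> * \<mu> offdiag"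
      by (rule int_approx[OF mu h]) (use d P in auto)
    then show ?thesis using P(4) by (simp add: algebra_simps)
  qed
  then have "\<bar>ba_integral \<mu> h - J\<bar> \<le> 0" by (intro le_eps_zero) auto
  then show ?thesis by simp
qed

lemma bddS_add: "bddS h1 \<Longrightarrow> bddS h2 \<Longrightarrow> bddS (\<lambda>z. h1 z + h2 z)"
  unfolding bddS_def by (metis (no_types, opaque_lifting) abs_triangle_ineq add_mono order_trans)

lemma bddS_scale: "bddS h \<Longrightarrow> bddS (\<lambda>z. c * h z)"
  unfolding bddS_def
proof (elim exE)
  fix K assume K: "\<forall>z\<in>offdiag. \<bar>h z\<bar> \<le> K"
  show "\<exists>K. \<forall>z\<in>offdiag. \<bar>c * h z\<bar> \<le> K"
    by (rule exI[of _ "\<bar>c\<bar> * K"]) (use K in \<open>auto simp: abs_mult intro: mult_left_mono\<close>)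
qed

lemma bddS_ind: "bddS (ind A)"
  unfolding bddS_def ind_def by (rule exI[of _ 1]) auto

lemma riem_add: "riem \<mu> (\<lambda>z. h1 z + h2 z) P t = riem \<mu> h1 P t + riem \<mu> h2 P t"
  unfolding riem_def by (simp add: sum.distrib distrib_right)

lemma riem_scale: "riem \<mu> (\<lambda>z. c * h z) P t = c * riem \<mu> h P t"
  unfolding riem_def by (simp add: sum_distrib_left mult.assoc)

lemma int_add:
  assumes mu: "padd \<mu>" and h1: "bddS h1" and h2: "bddS h2"
  shows "ba_integral \<mu> (\<lambda>z. h1 z + h2 z) = ba_integral \<mu> h1 + ba_integral \<mu> h2"
proof (rule int_crit[OF mu bddS_add[OF h1 h2]])
  fix \<delta> :: real assume d: "\<delta> > 0"
  obtain K1 where K1: "\<forall>z\<in>offdiag. \<bar>h1 z\<bar> \<le> K1" using h1 unfolding bddS_def by blast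
  obtain K2 where K2: "\<forall>z\<in>offdiag. \<bar>h2 z\<bar> \<le> K2" using h2 unfolding bddS_def by blast
  obtain P1 where P1: "is_partition offdiag P1" "finep h1 (\<delta>/2) P1" using fine_exists[of offdiag h1 K1 "\<delta>/2"] K1 d by auto
  obtain P2 where P2: "is_partition offdiag P2" "finep h2 (\<delta>/2) P2" using fine_exists[of offdiag h2 K2 "\<delta>/2"] K2 d by auto
  define Q where "Q = cref P1 P2"
  have Q: "is_partition offdiag Q" "refines Q P1" "refines Q P2"
    using cref_part[OF P1(1) P2(1)] unfolding Q_def by auto
  have f1: "finep h1 (\<delta>/2) Q" using fine_ref[OF Q(2) P1(2)] .
  have f2: "finep h2 (\<delta>/2) Q" using fine_ref[OF Q(3) P2(2)] .
  have f: "finep (\<lambda>z. h1 z + h2 z) \<delta> Q"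
    unfolding finep_def
  proof (intro ballI)
    fix B x y assume "B \<in> Q" "x \<in> B" "y \<in> B"
    then have "\<bar>h1 x - h1 y\<bar> \<le> \<delta>/2" "\<bar>h2 x - h2 y\<bar> \<le> \<delta>/2" using f1 f2 unfolding finep_def by auto
    moreover have "\<bar>h1 x + h2 x - (h1 y + h2 y)\<bar> \<le> \<bar>h1 x - h1 y\<bar> + \<bar>h2 x - h2 y\<bar>"
      using abs_triangle_ineq[of "h1 x - h1 y" "h2 x - h2 y"] by (simp add: algebra_simps)
    ultimately show "\<bar>h1 x + h2 x - (h1 y + h2 y)\<bar> \<le> \<delta>" by linarith
  qed
  define t where "t = (\<lambda>B. SOME x. x \<in> (B::('a \<times> 'a) set))"
  have tQ: "tags Q t" unfolding t_def using part_tags[OF Q(1)] .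
  have a1: "\<bar>ba_integral \<mu> h1 - riem \<mu> h1 Q t\<bar> \<le> \<delta>/2 * \<mu> offdiag"
    by (rule int_approx[OF mu h1]) (use d Q f1 tQ in auto)
  have a2: "\<bar>ba_integral \<mu> h2 - riem \<mu> h2 Q t\<bar> \<le> \<delta>/2 * \<mu> offdiag"
    by (rule int_approx[OF mu h2]) (use d Q f2 tQ in auto)
  have "\<bar>riem \<mu> (\<lambda>z. h1 z + h2 z) Q t - (ba_integral \<mu> h1 + ba_integral \<mu> h2)\<bar> \<le> \<mu> offdiag * \<delta>"
  proof -
    have e1: "\<delta>/2 * \<mu> offdiag = (\<delta> * \<mu> offdiag)/2" "\<mu> offdiag * \<delta> = \<delta> * \<mu> offdiag" by simp_all
    show ?thesis
      using a1[unfolded abs_le_iff] a2[unfolded abs_le_iff] unfolding riem_add abs_le_iff e1 by (intro conjI; linarith)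
  qed
  then show "\<exists>P t. is_partition offdiag P \<and> finep (\<lambda>z. h1 z + h2 z) \<delta> P \<and> tags P t \<and>
      \<bar>riem \<mu> (\<lambda>z. h1 z + h2 z) P t - (ba_integral \<mu> h1 + ba_integral \<mu> h2)\<bar> \<le> \<mu> offdiag * \<delta>"
    using Q(1) f tQ by blast
qed

lemma int_scale:
  assumes mu: "padd \<mu>" and h: "bddS h"
  shows "ba_integral \<mu> (\<lambda>z. c * h z) = c * ba_integral \<mu> h"
proof (rule int_crit[OF mu bddS_scale[OF h]])
  fix \<delta> :: real assume d: "\<delta> > 0"
  obtain K where K: "\<forall>z\<in>offdiag. \<bar>h z\<bar> \<le> K" using h unfolding bddS_def by blast
  define \<eta> where "\<eta> = \<delta> / (\<bar>c\<bar> + 1)"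
  have e: "\<eta> > 0" using d unfolding \<eta>_def by (simp add: add_pos_nonneg)
  have ce: "\<bar>c\<bar> * \<eta> \<le> \<delta>"
  proof -
    have "\<bar>c\<bar> * \<eta> \<le> (\<bar>c\<bar> + 1) * \<eta>" using e by simp
    also have "\<dots> = \<delta>" unfolding \<eta>_def by (simp add: add_pos_nonneg)
    finally show ?thesis .
  qed
  obtain P where P: "is_partition offdiag P" "finep h \<eta> P" using fine_exists[of offdiag h K \<eta>] K e by auto
  have f: "finep (\<lambda>z. c * h z) \<delta> P"
    unfolding finep_def
  proof (intro ballI)
    fix B x y assume "B \<in> P" "x \<in> B" "y \<in> B"
    then have "\<bar>h x - h y\<bar> \<le> \<eta>" using P(2) unfolding finep_def by blast
    then have "\<bar>c\<bar> * \<bar>h x - h y\<bar> \<le> \<bar>c\<bar> * \<eta>" by (intro mult_left_mono) auto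
    then show "\<bar>c * h x - c * h y\<bar> \<le> \<delta>" using ce by (simp add: abs_mult right_diff_distrib[symmetric])
  qed
  define t where "t = (\<lambda>B. SOME x. x \<in> (B::('a \<times> 'a) set))"
  have tP: "tags P t" unfolding t_def using part_tags[OF P(1)] .
  have a: "\<bar>ba_integral \<mu> h - riem \<mu> h P t\<bar> \<le> \<eta> * \<mu> offdiag"
    by (rule int_approx[OF mu h]) (use e P tP in auto)
  have "\<bar>riem \<mu> (\<lambda>z. c * h z) P t - c * ba_integral \<mu> h\<bar> = \<bar>c\<bar> * \<bar>ba_integral \<mu> h - riem \<mu> h P t\<bar>"
    unfolding riem_scale by (simp add: abs_mult[symmetric] algebra_simps)
  also have "\<dots> \<le> \<bar>c\<bar> * (\<eta> * \<mu> offdiag)" using a by (intro mult_left_mono) auto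
  also have "\<dots> = (\<bar>c\<bar> * \<eta>) * \<mu> offdiag" by simp
  also have "\<dots> \<le> \<delta> * \<mu> offdiag" using ce mu_S_nonneg[OF mu] by (intro mult_right_mono) auto
  finally show "\<exists>P t. is_partition offdiag P \<and> finep (\<lambda>z. c * h z) \<delta> P \<and> tags P t \<and>
      \<bar>riem \<mu> (\<lambda>z. c * h z) P t - c * ba_integral \<mu> h\<bar> \<le> \<mu> offdiag * \<delta>"
    using P(1) f tP by (auto simp: mult.commute)
qed

lemma riem_nonneg:
  assumes mu: "padd \<mu>" and P: "is_partition offdiag P" and t: "tags P t" and h: "\<forall>z\<in>offdiag. h z \<ge> 0"
  shows "riem \<mu> h P t \<ge> 0"
  unfolding riem_def
proof (rule sum_nonneg)
  fix B assume B: "B \<in> P"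
  have "B \<subseteq> offdiag" "t B \<in> B" using P B t by (auto simp: is_partition_def tags_def)
  then show "0 \<le> h (t B) * \<mu> B" using h padd_pos[OF mu] by (intro mult_nonneg_nonneg) auto
qed

lemma int_nonneg:
  assumes mu: "padd \<mu>" and hb: "bddS h" and h: "\<forall>z\<in>offdiag. h z \<ge> 0"
  shows "ba_integral \<mu> h \<ge> 0"
proof -
  obtain K where K: "\<forall>z\<in>offdiag. \<bar>h z\<bar> \<le> K" using hb unfolding bddS_def by blast
  have "- ba_integral \<mu> h \<le> \<delta> * \<mu> offdiag" if d: "\<delta> > 0" for \<delta>
  proof -
    obtain P where P: "is_partition offdiag P" "finep h \<delta> P" using fine_exists[of offdiag h K \<delta>] K d by auto
    have tP: "tags P (\<lambda>B. SOME x. x \<in> B)" using part_tags[OF P(1)] .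
    have "\<bar>ba_integral \<mu> h - riem \<mu> h P (\<lambda>B. SOME x. x \<in> B)\<bar> \<le> \<delta> * \<mu> offdiag"
      by (rule int_approx[OF mu hb]) (use d P tP in auto)
    moreover have "riem \<mu> h P (\<lambda>B. SOME x. x \<in> B) \<ge> 0" by (rule riem_nonneg[OF mu P(1) tP h])
    ultimately show ?thesis by linarith
  qed
  then have "- ba_integral \<mu> h \<le> 0" by (intro le_eps_zero) auto
  then show ?thesis by simp
qed

lemma int_mono:
  assumes mu: "padd \<mu>" and h: "bddS h" and h': "bddS h'" and le: "\<forall>z\<in>offdiag. h z \<le> h' z"
  shows "ba_integral \<mu> h \<le> ba_integral \<mu> h'"
proof -
  have "ba_integral \<mu> (\<lambda>z. h' z + (-1) * h z) = ba_integral \<mu> h' + (-1) * ba_integral \<mu> h"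
    using int_add[OF mu h' bddS_scale[OF h, of "-1"]] int_scale[OF mu h, of "-1"] by simp
  moreover have "ba_integral \<mu> (\<lambda>z. h' z + (-1) * h z) \<ge> 0"
    by (rule int_nonneg[OF mu bddS_add[OF h' bddS_scale[OF h]]]) (use le in auto)
  ultimately show ?thesis by simp
qed

lemma int_ind:
  assumes mu: "padd \<mu>" and A: "A \<subseteq> offdiag"
  shows "ba_integral \<mu> (ind A) = \<mu> A"
proof (rule int_crit[OF mu bddS_ind, where C = 0])
  fix \<delta> :: real assume d: "\<delta> > 0"
  define P where "P = {B \<in> {A, offdiag - A}. B \<noteq> {}}"
  have P: "is_partition offdiag P" unfolding is_partition_def P_def using A by auto
  have f: "finep (ind A) \<delta> P" unfolding finep_def P_def ind_def using d by auto
  define t where "t = (\<lambda>B. SOME x. x \<in> (B::('a \<times> 'a) set))"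
  have tP: "tags P t" unfolding t_def using part_tags[OF P] .
  have "riem \<mu> (ind A) P t = (\<Sum>B\<in>P. if B = A then \<mu> A else 0)"
    unfolding riem_def
  proof (rule sum.cong)
    fix B assume B: "B \<in> P"
    then have tB: "t B \<in> B" using tP unfolding tags_def by blast
    show "ind A (t B) * \<mu> B = (if B = A then \<mu> A else 0)"
    proof (cases "B = A")
      case False
      then have "B = offdiag - A" using B unfolding P_def by auto
      then show ?thesis using tB False by (simp add: ind_def)
    qed (use tB in \<open>simp add: ind_def\<close>)
  qed simp
  also have "\<dots> = \<mu> A"
  proof (cases "A = {}")
    case True
    have "(\<Sum>B\<in>P. if B = A then \<mu> A else 0) = 0" by (rule sum.neutral) (use True in \<open>auto simp: P_def\<close>)
    then show ?thesis using True padd_empty[OF mu] by simp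
  next
    case False
    then have "A \<in> P" unfolding P_def by simp
    moreover have "finite P" using P unfolding is_partition_def by simp
    ultimately show ?thesis by simp
  qed
  finally show "\<exists>P t. is_partition offdiag P \<and> finep (ind A) \<delta> P \<and> tags P t \<and> \<bar>riem \<mu> (ind A) P t - \<mu> A\<bar> \<le> 0 * \<delta>"
    using P f tP by auto
qed

lemma int_bound:
  assumes mu: "padd \<mu>" and hb: "bddS h" and h: "\<forall>z\<in>offdiag. \<bar>h z\<bar> \<le> K"
  shows "\<bar>ba_integral \<mu> h\<bar> \<le> K * \<mu> offdiag"
proof -
  have "\<bar>ba_integral \<mu> h\<bar> - K * \<mu> offdiag \<le> \<delta> * \<mu> offdiag" if d: "\<delta> > 0" for \<delta>
  proof -
    obtain P where P: "is_partition offdiag P" "finep h \<delta> P" using fine_exists[of offdiag h K \<delta>] h d by auto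
    define t where "t = (\<lambda>B. SOME x. x \<in> (B::('a \<times> 'a) set))"
    have tP: "tags P t" unfolding t_def using part_tags[OF P(1)] .
    have a: "\<bar>ba_integral \<mu> h - riem \<mu> h P t\<bar> \<le> \<delta> * \<mu> offdiag"
      by (rule int_approx[OF mu hb]) (use d P tP in auto)
    have "\<bar>riem \<mu> h P t\<bar> \<le> (\<Sum>B\<in>P. \<bar>h (t B) * \<mu> B\<bar>)" unfolding riem_def by (rule sum_abs)
    also have "\<dots> \<le> (\<Sum>B\<in>P. K * \<mu> B)"
    proof (rule sum_mono)
      fix B assume B: "B \<in> P"
      have "B \<subseteq> offdiag" "t B \<in> B" using P B tP by (auto simp: is_partition_def tags_def)
      then show "\<bar>h (t B) * \<mu> B\<bar> \<le> K * \<mu> B" using h padd_pos[OF mu]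
        by (auto simp: abs_mult intro: mult_right_mono)
    qed
    also have "\<dots> = K * \<mu> offdiag" using padd_part[OF mu P(1)] by (simp add: sum_distrib_left[symmetric])
    finally show ?thesis using a by linarith
  qed
  then have "\<bar>ba_integral \<mu> h\<bar> - K * \<mu> offdiag \<le> 0" by (intro le_eps_zero) auto
  then show ?thesis by simp
qed

definition lgraph :: "('b \<Rightarrow> real) set \<Rightarrow> (('b \<Rightarrow> real) \<Rightarrow> real) \<Rightarrow> (('b \<Rightarrow> real) \<times> real) set \<Rightarrow> bool" where
  "lgraph E p G \<longleftrightarrow> (\<forall>g a b. (g,a)\<in>G \<longrightarrow> (g,b)\<in>G \<longrightarrow> a = b) \<and>
     (\<forall>g a h b. (g,a)\<in>G \<longrightarrow> (h,b)\<in>G \<longrightarrow> ((\<lambda>x. g x + h x), a + b) \<in> G) \<and>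
     (\<forall>c g a. (g,a)\<in>G \<longrightarrow> ((\<lambda>x. c * g x), c * a) \<in> G) \<and>
     (\<forall>g a. (g,a)\<in>G \<longrightarrow> g \<in> E \<and> a \<le> p g) \<and> G \<noteq> {}"

lemma lgraphD:
  assumes "lgraph E p G"
  shows "\<forall>g a b. (g,a)\<in>G \<longrightarrow> (g,b)\<in>G \<longrightarrow> a = b"
    "\<forall>g a h b. (g,a)\<in>G \<longrightarrow> (h,b)\<in>G \<longrightarrow> ((\<lambda>x. g x + h x), a + b) \<in> G"
    "\<forall>c g a. (g,a)\<in>G \<longrightarrow> ((\<lambda>x. c * g x), c * a) \<in> G"
    "\<forall>g a. (g,a)\<in>G \<longrightarrow> g \<in> E \<and> a \<le> p g" "G \<noteq> {}"
  using assms unfolding lgraph_def by simp_all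

lemma lgraph_zero:
  assumes "lgraph E p G" shows "((\<lambda>x. 0), 0) \<in> G"
proof -
  have ne: "G \<noteq> {}" and sc: "\<forall>c g a. (g,a)\<in>G \<longrightarrow> ((\<lambda>x. c * g x), c * a) \<in> G"
    using assms unfolding lgraph_def by simp_all
  obtain w where "w \<in> G" using ne by blast
  then obtain g a where ga: "(g,a) \<in> G" by (cases w) auto
  have "((\<lambda>x. 0 * g x), 0 * a) \<in> G" using sc ga by blast
  then show ?thesis by simp
qed

lemma HB_ext:
  assumes E_add: "\<And>g h. g\<in>E \<Longrightarrow> h\<in>E \<Longrightarrow> (\<lambda>x. g x + h x) \<in> E"
    and E_sc: "\<And>c g. g\<in>E \<Longrightarrow> (\<lambda>x. c * g x) \<in> E"
    and p_sub: "\<And>g h. g\<in>E \<Longrightarrow> h\<in>E \<Longrightarrow> p (\<lambda>x. g x + h x) \<le> p g + p h"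
    and p_hom: "\<And>c g. c > 0 \<Longrightarrow> g\<in>E \<Longrightarrow> p (\<lambda>x. c * g x) = c * p g"
    and M: "lgraph E p M" and x0: "x0 \<in> E" "\<forall>a. (x0, a) \<notin> M"
  shows "\<exists>M'. lgraph E p M' \<and> M \<subseteq> M' \<and> M' \<noteq> M"
proof -
  have fn: "\<And>g a b. (g,a)\<in>M \<Longrightarrow> (g,b)\<in>M \<Longrightarrow> a = b"
    by (fact lgraphD(1)[OF M, rule_format])
  have add: "\<And>g a h b. (g,a)\<in>M \<Longrightarrow> (h,b)\<in>M \<Longrightarrow> ((\<lambda>x. g x + h x), a + b) \<in> M"
    by (fact lgraphD(2)[OF M, rule_format])
  have sc: "\<And>c g a. (g,a)\<in>M \<Longrightarrow> ((\<lambda>x. c * g x), c * a) \<in> M"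
    by (fact lgraphD(3)[OF M, rule_format])
  have dom: "\<And>g a. (g,a)\<in>M \<Longrightarrow> g \<in> E \<and> a \<le> p g"
    by (fact lgraphD(4)[OF M, rule_format])
  have z: "((\<lambda>x. 0), 0) \<in> M" using lgraph_zero[OF M] .
  define L where "L = {a - p (\<lambda>x. g x + (-1) * x0 x) | g a. (g,a) \<in> M}"
  have bnd: "a - p (\<lambda>x. g x + (-1) * x0 x) \<le> p (\<lambda>x. h x + x0 x) - b"
    if "(g,a) \<in> M" "(h,b) \<in> M" for g a h b
  proof -
    have gE: "g \<in> E" and hE: "h \<in> E" using dom that by auto
    have "a + b \<le> p (\<lambda>x. g x + h x)" using dom[OF add[OF that]] by simp
    also have "(\<lambda>x. g x + h x) = (\<lambda>x. (g x + (-1) * x0 x) + (h x + x0 x))" by auto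
    also have "p \<dots> \<le> p (\<lambda>x. g x + (-1) * x0 x) + p (\<lambda>x. h x + x0 x)"
      by (rule p_sub; intro E_add E_sc gE hE x0(1))
    finally show ?thesis by simp
  qed
  have Lne: "L \<noteq> {}" using z unfolding L_def by blast
  have Lbdd: "bdd_above L" unfolding bdd_above_def L_def using bnd[OF _ z] by blast
  define c where "c = Sup L"
  have c_le: "c \<le> p (\<lambda>x. h x + x0 x) - b" if "(h,b) \<in> M" for h b
    unfolding c_def by (rule cSup_least[OF Lne]) (use bnd that in \<open>auto simp: L_def\<close>)
  have c_ge: "a - p (\<lambda>x. g x + (-1) * x0 x) \<le> c" if "(g,a) \<in> M" for g a
    unfolding c_def by (rule cSup_upper[OF _ Lbdd]) (use that in \<open>auto simp: L_def\<close>)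
  define M' where "M' = {((\<lambda>x. g x + t * x0 x), a + t * c) | g a t. (g,a) \<in> M}"
  have inM': "((\<lambda>x. g x + t * x0 x), a + t * c) \<in> M'" if "(g,a) \<in> M" for g a t
    unfolding M'_def using that by blast
  have fn': "a + t * c = a' + t' * c"
    if "(g,a) \<in> M" "(g',a') \<in> M" "(\<lambda>x. g x + t * x0 x) = (\<lambda>x. g' x + t' * x0 x)" for g a g' a' t t'
  proof (cases "t = t'")
    case True
    have "g = g'"
    proof
      fix x show "g x = g' x" using fun_cong[OF that(3), of x] True by simp
    qed
    then show ?thesis using fn that True by blast
  next
    case False
    have "((\<lambda>x. (1/(t'-t)) * (g x + (-1) * g' x)), (1/(t'-t)) * (a + (-1) * a')) \<in> M"
      using sc[OF add[OF that(1) sc[OF that(2)]]] .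
    moreover have "(\<lambda>x. (1/(t'-t)) * (g x + (-1) * g' x)) = x0"
    proof
      fix x
      have "g x + t * x0 x = g' x + t' * x0 x" using fun_cong[OF that(3), of x] .
      then have "g x + (-1) * g' x = (t' - t) * x0 x" by (simp add: algebra_simps)
      then show "(1/(t'-t)) * (g x + (-1) * g' x) = x0 x" using False by simp
    qed
    ultimately show ?thesis using x0(2) by simp
  qed
  have dom': "a + t * c \<le> p (\<lambda>x. g x + t * x0 x)" if ga: "(g,a) \<in> M" for g a t
  proof -
    have gE: "g \<in> E" using dom ga by auto
    consider "t > 0" | "t < 0" | "t = 0" by linarith
    then show ?thesis
    proof cases
      case 1
      have m1: "((\<lambda>x. (1/t) * g x), (1/t) * a) \<in> M" using sc[OF ga] .
      have "c \<le> p (\<lambda>x. (1/t) * g x + x0 x) - (1/t) * a" using c_le[OF m1] .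
      then have "t * c \<le> t * (p (\<lambda>x. (1/t) * g x + x0 x) - (1/t) * a)" using 1
        by (intro mult_left_mono) auto
      also have "\<dots> = t * p (\<lambda>x. (1/t) * g x + x0 x) - a" using 1
        by (simp add: right_diff_distrib)
      also have "t * p (\<lambda>x. (1/t) * g x + x0 x) = p (\<lambda>x. t * ((1/t) * g x + x0 x))"
        by (rule p_hom[symmetric]; (intro E_add E_sc gE x0(1))?) (use 1 in simp)
      also have "(\<lambda>x. t * ((1/t) * g x + x0 x)) = (\<lambda>x. g x + t * x0 x)" using 1 by (auto simp: algebra_simps)
      finally show ?thesis by simp
    next
      case 2
      define s where "s = -t"
      have s: "s > 0" using 2 unfolding s_def by simp
      have m1: "((\<lambda>x. (1/s) * g x), (1/s) * a) \<in> M" using sc[OF ga] .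
      have "(1/s) * a - p (\<lambda>x. (1/s) * g x + (-1) * x0 x) \<le> c" using c_ge[OF m1] .
      then have "s * ((1/s) * a - p (\<lambda>x. (1/s) * g x + (-1) * x0 x)) \<le> s * c" using s
        by (simp add: mult_left_mono)
      then have "a - s * p (\<lambda>x. (1/s) * g x + (-1) * x0 x) \<le> s * c" using s
        by (simp add: right_diff_distrib)
      also have "s * p (\<lambda>x. (1/s) * g x + (-1) * x0 x) = p (\<lambda>x. s * ((1/s) * g x + (-1) * x0 x))"
        by (rule p_hom[symmetric]; (intro E_add E_sc gE x0(1))?) (use s in simp)
      also have "(\<lambda>x. s * ((1/s) * g x + (-1) * x0 x)) = (\<lambda>x. g x + t * x0 x)"
        using s unfolding s_def by (auto simp: algebra_simps)
      finally show ?thesis unfolding s_def by simp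
    next
      case 3
      then show ?thesis using dom[OF ga] by simp
    qed
  qed
  have "lgraph E p M'"
    unfolding lgraph_def
  proof (intro conjI allI impI)
    fix g a b assume "(g, a) \<in> M'" "(g, b) \<in> M'"
    then obtain g1 a1 t1 g2 a2 t2 where "(g1,a1) \<in> M" "(g2,a2) \<in> M"
      "g = (\<lambda>x. g1 x + t1 * x0 x)" "a = a1 + t1 * c" "g = (\<lambda>x. g2 x + t2 * x0 x)" "b = a2 + t2 * c"
      unfolding M'_def by blast
    then show "a = b" using fn'[of g1 a1 g2 a2 t1 t2] by simp
  next
    fix g a h b assume "(g, a) \<in> M'" "(h, b) \<in> M'"
    then obtain g1 a1 t1 g2 a2 t2 where m: "(g1,a1) \<in> M" "(g2,a2) \<in> M"
      "g = (\<lambda>x. g1 x + t1 * x0 x)" "a = a1 + t1 * c" "h = (\<lambda>x. g2 x + t2 * x0 x)" "b = a2 + t2 * c"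
      unfolding M'_def by blast
    have "((\<lambda>x. (g1 x + g2 x) + (t1 + t2) * x0 x), (a1 + a2) + (t1 + t2) * c) \<in> M'"
      using inM'[OF add[OF m(1,2)]] .
    moreover have "(\<lambda>x. (g1 x + g2 x) + (t1 + t2) * x0 x) = (\<lambda>x. g x + h x)" using m by (auto simp: algebra_simps)
    moreover have "(a1 + a2) + (t1 + t2) * c = a + b" using m by (auto simp: algebra_simps)
    ultimately show "((\<lambda>x. g x + h x), a + b) \<in> M'" by simp
  next
    fix c' g a assume "(g, a) \<in> M'"
    then obtain g1 a1 t1 where m: "(g1,a1) \<in> M" "g = (\<lambda>x. g1 x + t1 * x0 x)" "a = a1 + t1 * c"
      unfolding M'_def by blast
    have "((\<lambda>x. c' * g1 x + (c' * t1) * x0 x), c' * a1 + (c' * t1) * c) \<in> M'"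
      using inM'[OF sc[OF m(1)]] .
    moreover have "(\<lambda>x. c' * g1 x + (c' * t1) * x0 x) = (\<lambda>x. c' * g x)" using m by (auto simp: algebra_simps)
    moreover have "c' * a1 + (c' * t1) * c = c' * a" using m by (auto simp: algebra_simps)
    ultimately show "((\<lambda>x. c' * g x), c' * a) \<in> M'" by simp
  next
    fix g a assume "(g, a) \<in> M'"
    then obtain g1 a1 t1 where m: "(g1,a1) \<in> M" "g = (\<lambda>x. g1 x + t1 * x0 x)" "a = a1 + t1 * c"
      unfolding M'_def by blast
    have "g1 \<in> E" using m(1) dom by blast
    moreover have "(\<lambda>x. t1 * x0 x) \<in> E" using E_sc[OF x0(1)] .
    ultimately show "g \<in> E" unfolding m(2) by (rule E_add)
    show "a \<le> p g" using m dom' by auto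
  next
    show "M' \<noteq> {}" using inM'[OF z] by blast
  qed
  moreover have "M \<subseteq> M'"
  proof
    fix w assume w: "w \<in> M"
    obtain g a where "w = (g,a)" by (cases w)
    then show "w \<in> M'" using inM'[of g a 0] w by simp
  qed
  moreover have "(x0, c) \<in> M'" using inM'[OF z, of 1] by simp
  ultimately show ?thesis using x0(2) by blast
qed

lemma HB:
  assumes E_add: "\<And>g h. g\<in>E \<Longrightarrow> h\<in>E \<Longrightarrow> (\<lambda>x. g x + h x) \<in> E"
    and E_sc: "\<And>c g. g\<in>E \<Longrightarrow> (\<lambda>x. c * g x) \<in> E"
    and p_sub: "\<And>g h. g\<in>E \<Longrightarrow> h\<in>E \<Longrightarrow> p (\<lambda>x. g x + h x) \<le> p g + p h"
    and p_hom: "\<And>c g. c > 0 \<Longrightarrow> g\<in>E \<Longrightarrow> p (\<lambda>x. c * g x) = c * p g"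
    and G0: "lgraph E p G0"
  shows "\<exists>\<psi>. (\<forall>g\<in>E. \<forall>h\<in>E. \<psi> (\<lambda>x. g x + h x) = \<psi> g + \<psi> h) \<and> (\<forall>c. \<forall>g\<in>E. \<psi> (\<lambda>x. c * g x) = c * \<psi> g)
     \<and> (\<forall>g\<in>E. \<psi> g \<le> p g) \<and> (\<forall>g a. (g,a)\<in>G0 \<longrightarrow> \<psi> g = a)"
proof -
  define \<A> where "\<A> = {G. lgraph E p G \<and> G0 \<subseteq> G}"
  have "\<forall>C\<in>chains \<A>. \<exists>U\<in>\<A>. \<forall>X\<in>C. X \<subseteq> U"
  proof
    fix C assume C: "C \<in> chains \<A>"
    show "\<exists>U\<in>\<A>. \<forall>X\<in>C. X \<subseteq> U"
    proof (cases "C = {}")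
      case True
      then show ?thesis using G0 unfolding \<A>_def by auto
    next
      case False
      have CA: "C \<subseteq> \<A>" using chainsD2[OF C] .
      have ch: "\<And>X Y. X \<in> C \<Longrightarrow> Y \<in> C \<Longrightarrow> X \<subseteq> Y \<or> Y \<subseteq> X" using chainsD[OF C] by blast
      have lg: "\<And>X. X \<in> C \<Longrightarrow> lgraph E p X" using CA unfolding \<A>_def by blast
      have two: "\<exists>X\<in>C. u \<in> X \<and> v \<in> X" if uv: "u \<in> \<Union>C" "v \<in> \<Union>C" for u v
      proof -
        obtain X Y where "X \<in> C" "Y \<in> C" "u \<in> X" "v \<in> Y" using uv by blast
        then show ?thesis using ch[of X Y] by blast
      qed
      have "lgraph E p (\<Union>C)"
        unfolding lgraph_def
      proof (intro conjI allI impI)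
        fix g a b assume "(g, a) \<in> \<Union>C" "(g, b) \<in> \<Union>C"
        then obtain X where "X \<in> C" "(g,a) \<in> X" "(g,b) \<in> X" using two by blast
        then show "a = b" using lg unfolding lgraph_def by blast
      next
        fix g a h b assume "(g, a) \<in> \<Union>C" "(h, b) \<in> \<Union>C"
        then obtain X where "X \<in> C" "(g,a) \<in> X" "(h,b) \<in> X" using two by blast
        then show "((\<lambda>x. g x + h x), a + b) \<in> \<Union>C" using lg unfolding lgraph_def by blast
      next
        fix c g a assume "(g, a) \<in> \<Union>C"
        then obtain X where "X \<in> C" "(g,a) \<in> X" by blast
        then show "((\<lambda>x. c * g x), c * a) \<in> \<Union>C" using lg unfolding lgraph_def by blast
      next
        fix g a assume "(g, a) \<in> \<Union>C"
        then obtain X where "X \<in> C" "(g,a) \<in> X" by blast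
        then show "g \<in> E" "a \<le> p g" using lg unfolding lgraph_def by blast+
      next
        obtain X where "X \<in> C" using False by blast
        then show "\<Union>C \<noteq> {}" using lg unfolding lgraph_def by blast
      qed
      moreover have "G0 \<subseteq> \<Union>C" using False CA unfolding \<A>_def by blast
      ultimately show ?thesis unfolding \<A>_def by blast
    qed
  qed
  then obtain M where M: "M \<in> \<A>" "\<forall>X\<in>\<A>. M \<subseteq> X \<longrightarrow> X = M" using Zorn_Lemma2 by blast
  have lM: "lgraph E p M" and G0M: "G0 \<subseteq> M" using M(1) unfolding \<A>_def by auto
  have tot: "\<exists>a. (g,a) \<in> M" if g: "g \<in> E" for g
  proof (rule ccontr)
    assume "\<nexists>a. (g, a) \<in> M"
    then obtain M' where "lgraph E p M'" "M \<subseteq> M'" "M' \<noteq> M"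
      using HB_ext[OF E_add E_sc p_sub p_hom lM g] by blast
    then show False using M(2) G0M unfolding \<A>_def by blast
  qed
  define \<psi> where "\<psi> g = (THE a. (g,a) \<in> M)" for g
  have fn: "\<And>g a b. (g,a)\<in>M \<Longrightarrow> (g,b)\<in>M \<Longrightarrow> a = b"
    by (fact lgraphD(1)[OF lM, rule_format])
  have add: "\<And>g a h b. (g,a)\<in>M \<Longrightarrow> (h,b)\<in>M \<Longrightarrow> ((\<lambda>x. g x + h x), a + b) \<in> M"
    by (fact lgraphD(2)[OF lM, rule_format])
  have sc: "\<And>c g a. (g,a)\<in>M \<Longrightarrow> ((\<lambda>x. c * g x), c * a) \<in> M"
    by (fact lgraphD(3)[OF lM, rule_format])
  have dom: "\<And>g a. (g,a)\<in>M \<Longrightarrow> g \<in> E \<and> a \<le> p g"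
    by (fact lgraphD(4)[OF lM, rule_format])
  have psi: "\<psi> g = a" if "(g,a) \<in> M" for g a
    unfolding \<psi>_def using fn that by blast
  have psiM: "(g, \<psi> g) \<in> M" if "g \<in> E" for g
    using tot[OF that] psi by auto
  show ?thesis
  proof (intro exI conjI ballI allI impI)
    fix g h assume "g \<in> E" "h \<in> E"
    then show "\<psi> (\<lambda>x. g x + h x) = \<psi> g + \<psi> h" using psi add psiM by blast
  next
    fix c g assume "g \<in> E"
    then show "\<psi> (\<lambda>x. c * g x) = c * \<psi> g" using psi sc psiM by blast
  next
    fix g assume "g \<in> E"
    then show "\<psi> g \<le> p g" using dom psiM by blast
  next
    fix g a assume "(g, a) \<in> G0"
    then show "\<psi> g = a" using psi G0M by blast
  qed
qed

definition Phi :: "('a::metric_space \<Rightarrow> real) \<Rightarrow> 'a \<times> 'a \<Rightarrow> real" where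
  "Phi f = (\<lambda>(x, y). (f x - f y) / dist x y)"

lemma Phi_star_Phi: "Phi_star \<mu> f = ba_integral \<mu> (Phi f)"
  by (simp add: Phi_star_def Phi_def)

lemma Phi_add: "Phi (\<lambda>x. f x + g x) = (\<lambda>z. Phi f z + Phi g z)"
  by (auto simp: Phi_def add_divide_distrib[symmetric] algebra_simps)

lemma Phi_scale: "Phi (\<lambda>x. c * f x) = (\<lambda>z. c * Phi f z)"
  by (auto simp: Phi_def right_diff_distrib[symmetric])

lemma Lip0_add: "f \<in> Lip0 z0 \<Longrightarrow> g \<in> Lip0 z0 \<Longrightarrow> (\<lambda>x. f x + g x) \<in> Lip0 z0"
proof -
  assume f: "f \<in> Lip0 z0" and g: "g \<in> Lip0 z0"
  obtain L1 where L1: "\<forall>x y. \<bar>f x - f y\<bar> \<le> L1 * dist x y" using f by (auto simp: Lip0_def)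
  obtain L2 where L2: "\<forall>x y. \<bar>g x - g y\<bar> \<le> L2 * dist x y" using g by (auto simp: Lip0_def)
  have "\<bar>(f x + g x) - (f y + g y)\<bar> \<le> (L1 + L2) * dist x y" for x y
  proof -
    have "\<bar>(f x + g x) - (f y + g y)\<bar> \<le> \<bar>f x - f y\<bar> + \<bar>g x - g y\<bar>"
      using abs_triangle_ineq[of "f x - f y" "g x - g y"] by (simp add: algebra_simps)
    also have "\<dots> \<le> L1 * dist x y + L2 * dist x y" using L1 L2 by (intro add_mono) auto
    finally show ?thesis by (simp add: algebra_simps)
  qed
  then show ?thesis using f g by (auto simp: Lip0_def)
qed

lemma Lip0_scale: "f \<in> Lip0 z0 \<Longrightarrow> (\<lambda>x. c * f x) \<in> Lip0 z0"
proof -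
  assume f: "f \<in> Lip0 z0"
  obtain L where L: "\<forall>x y. \<bar>f x - f y\<bar> \<le> L * dist x y" using f by (auto simp: Lip0_def)
  have "\<bar>c * f x - c * f y\<bar> \<le> (\<bar>c\<bar> * L) * dist x y" for x y
  proof -
    have "\<bar>c * f x - c * f y\<bar> = \<bar>c\<bar> * \<bar>f x - f y\<bar>" by (simp add: abs_mult[symmetric] right_diff_distrib)
    also have "\<dots> \<le> \<bar>c\<bar> * (L * dist x y)" using L by (intro mult_left_mono) auto
    finally show ?thesis by simp
  qed
  then show ?thesis using f by (auto simp: Lip0_def)
qed

lemma Lip0_zero: "(\<lambda>x. 0) \<in> Lip0 z0"
  unfolding Lip0_def by (auto intro!: exI[of _ 0])

lemma Phi_bound:
  assumes "f \<in> Lip0 z0" "z \<in> offdiag"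
  shows "\<bar>Phi f z\<bar> \<le> lipnorm f"
proof -
  obtain x y where z: "z = (x,y)" "x \<noteq> y" using assms(2) by (cases z) (auto simp: offdiag_def)
  obtain L where L: "\<forall>x y. \<bar>f x - f y\<bar> \<le> L * dist x y" using assms(1) by (auto simp: Lip0_def)
  have "\<bar>f x - f y\<bar> / dist x y \<le> lipnorm f" by (rule lipnorm_ge[of f L]) (use L z in auto)
  then show ?thesis using z by (simp add: Phi_def abs_divide)
qed

lemma Phi_bddS: "f \<in> Lip0 z0 \<Longrightarrow> bddS (Phi f)"
  unfolding bddS_def using Phi_bound by blast

lemma Phi_inj:
  assumes "f \<in> Lip0 z0" "g \<in> Lip0 z0" "Phi f = Phi g"
  shows "f = g"
proof
  fix x show "f x = g x"
  proof (cases "x = z0")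
    case True then show ?thesis using assms by (simp add: Lip0_def)
  next
    case False
    have "Phi f (x, z0) = Phi g (x, z0)" using assms(3) by simp
    then have "(f x - f z0) / dist x z0 = (g x - g z0) / dist x z0" by (simp add: Phi_def)
    then have "f x - f z0 = g x - g z0" using False by (simp add: divide_cancel_right)
    then show ?thesis using assms(1,2) by (simp add: Lip0_def)
  qed
qed

lemma bddS_bdd:
  assumes "bddS g"
  shows "bdd_above (g ` offdiag)"
proof -
  obtain K where K: "\<forall>z\<in>offdiag. \<bar>g z\<bar> \<le> K" using assms unfolding bddS_def by blast
  show ?thesis unfolding bdd_above_def
  proof (intro exI[of _ K] ballI)
    fix v assume "v \<in> g ` offdiag"
    then obtain z where "z \<in> offdiag" "v = g z" by auto
    then show "v \<le> K" using K abs_le_D1 by blast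
  qed
qed

lemma bddS_sum: "finite F \<Longrightarrow> (\<forall>B\<in>F. bddS (f B)) \<Longrightarrow> bddS (\<lambda>z. \<Sum>B\<in>F. f B z)"
proof (induction F rule: finite_induct)
  case empty then show ?case unfolding bddS_def by (auto intro!: exI[of _ 0])
next
  case (insert B F)
  then have "bddS (\<lambda>z. f B z + (\<Sum>B\<in>F. f B z))" by (intro bddS_add) auto
  then show ?case using insert by simp
qed

lemma Sup_add_le:
  fixes g h :: "'a \<times> 'a \<Rightarrow> real"
  assumes "(offdiag :: ('a \<times> 'a) set) \<noteq> {}" "bddS g" "bddS h"
  shows "Sup ((\<lambda>z. g z + h z) ` offdiag) \<le> Sup (g ` offdiag) + Sup (h ` offdiag)"
proof (rule cSup_least)
  show "(\<lambda>z. g z + h z) ` offdiag \<noteq> {}" using assms(1) by simp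
  fix v assume "v \<in> (\<lambda>z. g z + h z) ` offdiag"
  then obtain z where z: "z \<in> offdiag" "v = g z + h z" by auto
  have "g z \<le> Sup (g ` offdiag)" by (rule cSup_upper) (use z bddS_bdd[OF assms(2)] in auto)
  moreover have "h z \<le> Sup (h ` offdiag)" by (rule cSup_upper) (use z bddS_bdd[OF assms(3)] in auto)
  ultimately show "v \<le> Sup (g ` offdiag) + Sup (h ` offdiag)" using z by simp
qed

lemma Sup_scale:
  fixes g :: "'a \<times> 'a \<Rightarrow> real"
  assumes "(offdiag :: ('a \<times> 'a) set) \<noteq> {}" "bddS g" "c > 0"
  shows "Sup ((\<lambda>z. c * g z) ` offdiag) = c * Sup (g ` offdiag)"
proof (rule antisym)
  show "Sup ((\<lambda>z. c * g z) ` offdiag) \<le> c * Sup (g ` offdiag)"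
  proof (rule cSup_least)
    show "(\<lambda>z. c * g z) ` offdiag \<noteq> {}" using assms(1) by simp
    fix v assume "v \<in> (\<lambda>z. c * g z) ` offdiag"
    then obtain z where z: "z \<in> offdiag" "v = c * g z" by auto
    have "g z \<le> Sup (g ` offdiag)" by (rule cSup_upper) (use z bddS_bdd[OF assms(2)] in auto)
    then show "v \<le> c * Sup (g ` offdiag)" using z assms(3) by simp
  qed
  have "Sup (g ` offdiag) \<le> Sup ((\<lambda>z. c * g z) ` offdiag) / c"
  proof (rule cSup_least)
    show "g ` offdiag \<noteq> {}" using assms(1) by simp
    fix v assume "v \<in> g ` offdiag"
    then obtain z where z: "z \<in> offdiag" "v = g z" by auto
    have "c * g z \<le> Sup ((\<lambda>z. c * g z) ` offdiag)"
      by (rule cSup_upper) (use z bddS_bdd[OF bddS_scale[OF assms(2)]] in auto)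
    then show "v \<le> Sup ((\<lambda>z. c * g z) ` offdiag) / c" using z assms(3) by (simp add: le_divide_eq mult.commute)
  qed
  then show "c * Sup (g ` offdiag) \<le> Sup ((\<lambda>z. c * g z) ` offdiag)" using assms(3) by (simp add: le_divide_eq mult.commute)
qed

lemma Sup_le_const:
  fixes g :: "'a \<times> 'a \<Rightarrow> real"
  assumes "(offdiag :: ('a \<times> 'a) set) \<noteq> {}" "\<forall>z\<in>offdiag. g z \<le> K"
  shows "Sup (g ` offdiag) \<le> K"
  by (rule cSup_least) (use assms in auto)

lemma lipnorm_le_Sup:
  assumes f: "f \<in> Lip0 z0" and ne: "offdiag \<noteq> ({} :: ('a::metric_space \<times> 'a) set)"
  shows "lipnorm f \<le> Sup (Phi f ` (offdiag :: ('a \<times> 'a) set))"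
proof -
  have bdd: "bdd_above (Phi f ` offdiag)" using bddS_bdd[OF Phi_bddS[OF f]] .
  have up: "Phi f z \<le> Sup (Phi f ` offdiag)" if "z \<in> offdiag" for z
    by (rule cSup_upper) (use that bdd in auto)
  obtain x y :: 'a where xy: "x \<noteq> y" using ne by (auto simp: offdiag_def)
  have "Phi f (x,y) + Phi f (y,x) = 0" by (simp add: Phi_def dist_commute diff_divide_distrib)
  moreover have "(x,y) \<in> offdiag" "(y,x) \<in> offdiag" using xy by (auto simp: offdiag_def)
  ultimately have "Phi f (x,y) \<le> Sup (Phi f ` offdiag)" "Phi f (y,x) \<le> Sup (Phi f ` offdiag)"
    "Phi f (x,y) + Phi f (y,x) = 0" using up by auto
  then have z: "0 \<le> Sup (Phi f ` offdiag)" by linarith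
  show ?thesis unfolding lipnorm_def
  proof (rule cSup_least)
    fix v assume "v \<in> insert 0 {\<bar>f x - f y\<bar> / dist x y |x y. x \<noteq> y}"
    then consider "v = 0" | x y where "x \<noteq> y" "v = \<bar>f x - f y\<bar> / dist x y" by blast
    then show "v \<le> Sup (Phi f ` offdiag)"
    proof cases
      case 1 then show ?thesis using z by simp
    next
      case 2
      have "(x,y) \<in> offdiag" "(y,x) \<in> offdiag" using 2 by (auto simp: offdiag_def)
      then have "Phi f (x,y) \<le> Sup (Phi f ` offdiag)" "Phi f (y,x) \<le> Sup (Phi f ` offdiag)" using up by auto
      moreover have "Phi f (y,x) = - Phi f (x,y)" by (simp add: Phi_def dist_commute minus_divide_left)
      moreover have "v = \<bar>Phi f (x,y)\<bar>" using 2 by (simp add: Phi_def abs_divide)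
      ultimately show ?thesis by (simp add: abs_if)
    qed
  qed simp
qed

lemma functional_bound:
  assumes phi: "is_lip0_functional z0 \<phi>" and dn: "dual_norm z0 \<phi> = 1" and f: "f \<in> Lip0 z0"
  shows "\<bar>\<phi> f\<bar> \<le> lipnorm f"
proof -
  obtain C where C: "\<forall>f\<in>Lip0 z0. \<bar>\<phi> f\<bar> \<le> C * lipnorm f" using phi unfolding is_lip0_functional_def by blast
  have sc: "\<forall>c. \<forall>f\<in>Lip0 z0. \<phi> (\<lambda>x. c * f x) = c * \<phi> f" using phi unfolding is_lip0_functional_def by blast
  define D where "D = {\<bar>\<phi> f\<bar> | f. f \<in> Lip0 z0 \<and> lipnorm f \<le> 1}"
  have Dbdd: "bdd_above D" unfolding bdd_above_def D_def
  proof (intro exI[of _ "\<bar>C\<bar>"] ballI)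
    fix v assume "v \<in> {\<bar>\<phi> f\<bar> | f. f \<in> Lip0 z0 \<and> lipnorm f \<le> 1}"
    then obtain g where g: "g \<in> Lip0 z0" "lipnorm g \<le> 1" "v = \<bar>\<phi> g\<bar>" by blast
    obtain L where L: "\<forall>x y. \<bar>g x - g y\<bar> \<le> L * dist x y" using g(1) by (auto simp: Lip0_def)
    have l0: "0 \<le> lipnorm g" using lipnorm_nonneg[of g L] L by auto
    have "v \<le> C * lipnorm g" using C g by auto
    also have "\<dots> \<le> \<bar>C\<bar> * lipnorm g" using l0 by (intro mult_right_mono) auto
    also have "\<dots> \<le> \<bar>C\<bar> * 1" using g(2) by (intro mult_left_mono) auto
    finally show "v \<le> \<bar>C\<bar>" by simp
  qed
  have Dle: "\<bar>\<phi> g\<bar> \<le> 1" if "g \<in> Lip0 z0" "lipnorm g \<le> 1" for g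
  proof -
    have "\<bar>\<phi> g\<bar> \<le> Sup D" by (rule cSup_upper[OF _ Dbdd]) (use that in \<open>auto simp: D_def\<close>)
    then show ?thesis using dn unfolding dual_norm_def D_def by simp
  qed
  obtain L where L: "\<forall>x y. \<bar>f x - f y\<bar> \<le> L * dist x y" using f by (auto simp: Lip0_def)
  have l0: "0 \<le> lipnorm f" using lipnorm_nonneg[of f L] L by auto
  show ?thesis
  proof (cases "lipnorm f = 0")
    case True
    have "f x = 0" for x
    proof -
      have "\<bar>f x - f z0\<bar> \<le> 0" using lipnorm_le_Lip[OF f, of x z0] True by (cases "x = z0") auto
      then show ?thesis using f by (simp add: Lip0_def)
    qed
    then have "f = (\<lambda>x. 0 * f x)" by auto
    then have "\<phi> f = 0 * \<phi> f" using sc f by metis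
    then show ?thesis using l0 by simp
  next
    case False
    define l where "l = lipnorm f"
    have l: "l > 0" using False l0 unfolding l_def by simp
    have g: "(\<lambda>x. (1/l) * f x) \<in> Lip0 z0" using Lip0_scale[OF f] .
    have "lipnorm (\<lambda>x. (1/l) * f x) \<le> 1"
    proof (rule lipnorm_le)
      fix x y :: 'a assume xy: "x \<noteq> y"
      have "\<bar>f x - f y\<bar> \<le> l * dist x y" using lipnorm_le_Lip[OF f xy] unfolding l_def .
      then have "\<bar>f x - f y\<bar> / l \<le> dist x y" using l by (simp add: divide_le_eq mult.commute)
      moreover have "\<bar>(1/l) * f x - (1/l) * f y\<bar> = \<bar>f x - f y\<bar> / l"
      proof -
        have "(1/l) * f x - (1/l) * f y = (1/l) * (f x - f y)" by (simp add: algebra_simps)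
        then show ?thesis using l by (simp add: abs_mult)
      qed
      ultimately have "\<bar>(1/l) * f x - (1/l) * f y\<bar> \<le> dist x y" by simp
      then show "\<bar>(1/l) * f x - (1/l) * f y\<bar> / dist x y \<le> 1" using xy by (simp add: divide_le_eq)
    qed simp
    then have "\<bar>\<phi> (\<lambda>x. (1/l) * f x)\<bar> \<le> 1" using Dle g by blast
    moreover have "\<phi> (\<lambda>x. (1/l) * f x) = (1/l) * \<phi> f" using sc f by blast
    ultimately have "\<bar>(1/l) * \<phi> f\<bar> \<le> 1" by simp
    then have "\<bar>\<phi> f\<bar> / l \<le> 1" using l by (simp add: abs_mult)
    then show ?thesis using l unfolding l_def by (simp add: divide_le_eq)
  qed
qed

lemma padd_is_ba:
  assumes mu: "padd \<mu>"
  shows "is_ba \<mu>" "ba_norm \<mu> = \<mu> offdiag"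
proof -
  have sums: "(\<Sum>B\<in>P. \<bar>\<mu> B\<bar>) = \<mu> offdiag" if P: "is_partition offdiag P" for P
  proof -
    have "(\<Sum>B\<in>P. \<bar>\<mu> B\<bar>) = (\<Sum>B\<in>P. \<mu> B)"
    proof (rule sum.cong)
      fix B assume "B \<in> P"
      then have "B \<subseteq> offdiag" using P by (auto simp: is_partition_def)
      then show "\<bar>\<mu> B\<bar> = \<mu> B" using padd_pos[OF mu] by simp
    qed simp
    then show ?thesis using padd_part[OF mu P] by simp
  qed
  show "is_ba \<mu>" unfolding is_ba_def
    using mu sums unfolding padd_def by auto
  obtain P0 :: "('a \<times> 'a) set set" where P0: "is_partition offdiag P0"
    using fine_exists[of "offdiag :: ('a \<times> 'a) set" "\<lambda>z. 0" 0 1] by auto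
  have "{(\<Sum>B\<in>P. \<bar>\<mu> B\<bar>) | P. is_partition offdiag P} = {\<mu> offdiag}"
  proof
    show "{(\<Sum>B\<in>P. \<bar>\<mu> B\<bar>) | P. is_partition offdiag P} \<subseteq> {\<mu> offdiag}" using sums by auto
    have "\<mu> offdiag = (\<Sum>B\<in>P0. \<bar>\<mu> B\<bar>)" using sums[OF P0] by simp
    then show "{\<mu> offdiag} \<subseteq> {(\<Sum>B\<in>P. \<bar>\<mu> B\<bar>) | P. is_partition offdiag P}" using P0 by blast
  qed
  then show "ba_norm \<mu> = \<mu> offdiag" unfolding ba_norm_def by simp
qed

lemma represent:
  fixes z0 :: "'a::metric_space" and \<phi> :: "('a \<Rightarrow> real) \<Rightarrow> real"
  assumes ne: "(offdiag :: ('a \<times> 'a) set) \<noteq> {}" and phi: "is_lip0_functional z0 \<phi>" and dn: "dual_norm z0 \<phi> = 1"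
  shows "\<exists>\<mu> :: ('a \<times> 'a) set \<Rightarrow> real. padd \<mu> \<and> \<mu> offdiag = 1 \<and> (\<forall>f\<in>Lip0 z0. Phi_star \<mu> f = \<phi> f)"
proof -
  define E where "E = {g :: 'a \<times> 'a \<Rightarrow> real. bddS g}"
  define p where "p g = Sup (g ` (offdiag :: ('a \<times> 'a) set))" for g :: "'a \<times> 'a \<Rightarrow> real"
  define G0 where "G0 = {(Phi f, \<phi> f) | f. f \<in> Lip0 z0}"
  have padd': "\<forall>f\<in>Lip0 z0. \<forall>g\<in>Lip0 z0. \<phi> (\<lambda>x. f x + g x) = \<phi> f + \<phi> g"
    and psc: "\<forall>c. \<forall>f\<in>Lip0 z0. \<phi> (\<lambda>x. c * f x) = c * \<phi> f"
    using phi unfolding is_lip0_functional_def by blast+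
  have E_add: "\<And>g h. g\<in>E \<Longrightarrow> h\<in>E \<Longrightarrow> (\<lambda>x. g x + h x) \<in> E" unfolding E_def using bddS_add by blast
  have E_sc: "\<And>c g. g\<in>E \<Longrightarrow> (\<lambda>x. c * g x) \<in> E" unfolding E_def using bddS_scale by blast
  have p_sub: "\<And>g h. g\<in>E \<Longrightarrow> h\<in>E \<Longrightarrow> p (\<lambda>x. g x + h x) \<le> p g + p h"
    unfolding E_def p_def using Sup_add_le[OF ne] by blast
  have p_hom: "\<And>c g. c > 0 \<Longrightarrow> g\<in>E \<Longrightarrow> p (\<lambda>x. c * g x) = c * p g"
    unfolding E_def p_def using Sup_scale[OF ne] by blast
  have G0: "lgraph E p G0"
    unfolding lgraph_def
  proof (intro conjI allI impI)
    fix g a b assume "(g, a) \<in> G0" "(g, b) \<in> G0"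
    then obtain f1 f2 where "f1 \<in> Lip0 z0" "f2 \<in> Lip0 z0" "g = Phi f1" "a = \<phi> f1" "g = Phi f2" "b = \<phi> f2"
      unfolding G0_def by blast
    then show "a = b" using Phi_inj by metis
  next
    fix g a h b assume "(g, a) \<in> G0" "(h, b) \<in> G0"
    then obtain f1 f2 where f: "f1 \<in> Lip0 z0" "f2 \<in> Lip0 z0" "g = Phi f1" "a = \<phi> f1" "h = Phi f2" "b = \<phi> f2"
      unfolding G0_def by blast
    have "(Phi (\<lambda>x. f1 x + f2 x), \<phi> (\<lambda>x. f1 x + f2 x)) \<in> G0" unfolding G0_def using Lip0_add[OF f(1,2)] by blast
    then show "((\<lambda>x. g x + h x), a + b) \<in> G0" using f padd' by (simp add: Phi_add)
  next
    fix c g a assume "(g, a) \<in> G0"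
    then obtain f1 where f: "f1 \<in> Lip0 z0" "g = Phi f1" "a = \<phi> f1" unfolding G0_def by blast
    have "(Phi (\<lambda>x. c * f1 x), \<phi> (\<lambda>x. c * f1 x)) \<in> G0" unfolding G0_def using Lip0_scale[OF f(1)] by blast
    then show "((\<lambda>x. c * g x), c * a) \<in> G0" using f psc by (simp add: Phi_scale)
  next
    fix g a assume "(g, a) \<in> G0"
    then obtain f1 where f: "f1 \<in> Lip0 z0" "g = Phi f1" "a = \<phi> f1" unfolding G0_def by blast
    show "g \<in> E" unfolding E_def using Phi_bddS[OF f(1)] f(2) by simp
    have "a \<le> \<bar>\<phi> f1\<bar>" using f by simp
    also have "\<dots> \<le> lipnorm f1" by (rule functional_bound[OF phi dn f(1)])
    also have "\<dots> \<le> p g" unfolding p_def f(2) by (rule lipnorm_le_Sup[OF f(1) ne])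
    finally show "a \<le> p g" .
  next
    show "G0 \<noteq> {}" unfolding G0_def using Lip0_zero by blast
  qed
  obtain \<psi> where psi_add: "\<forall>g\<in>E. \<forall>h\<in>E. \<psi> (\<lambda>x. g x + h x) = \<psi> g + \<psi> h"
    and psi_sc: "\<forall>c. \<forall>g\<in>E. \<psi> (\<lambda>x. c * g x) = c * \<psi> g"
    and psi_p: "\<forall>g\<in>E. \<psi> g \<le> p g" and psi_G0: "\<forall>g a. (g,a)\<in>G0 \<longrightarrow> \<psi> g = a"
    using HB[OF E_add E_sc p_sub p_hom G0] by blast
  define \<mu> where "\<mu> A = \<psi> (ind A)" for A :: "('a \<times> 'a) set"
  have indE: "ind A \<in> E" for A :: "('a \<times> 'a) set" unfolding E_def using bddS_ind by blast
  have mu_neg: "\<psi> (\<lambda>z. (-1) * ind A z) = - \<mu> A" for A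
  proof -
    have "\<psi> (\<lambda>z. (-1) * ind A z) = (-1) * \<psi> (ind A)" using psi_sc indE by blast
    then show ?thesis unfolding \<mu>_def by simp
  qed
  have mu: "padd \<mu>"
    unfolding padd_def
  proof (intro conjI allI impI)
    fix A B :: "('a \<times> 'a) set" assume "A \<subseteq> offdiag \<and> B \<subseteq> offdiag \<and> A \<inter> B = {}"
    then have "ind (A \<union> B) = (\<lambda>z. ind A z + ind B z)" unfolding ind_def by (intro ext) auto
    then show "\<mu> (A \<union> B) = \<mu> A + \<mu> B" unfolding \<mu>_def using psi_add indE by simp
  next
    fix A :: "('a \<times> 'a) set" assume A: "A \<subseteq> offdiag"
    have "\<psi> (\<lambda>z. (-1) * ind A z) \<le> p (\<lambda>z. (-1) * ind A z)" using psi_p E_sc[OF indE] by blast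
    also have "\<dots> \<le> 0" unfolding p_def by (rule Sup_le_const[OF ne]) (auto simp: ind_def)
    finally show "0 \<le> \<mu> A" using mu_neg by simp
  qed
  have muS: "\<mu> offdiag = 1"
  proof -
    have "\<mu> offdiag \<le> p (ind offdiag)" unfolding \<mu>_def using psi_p indE by blast
    also have "\<dots> \<le> 1" unfolding p_def by (rule Sup_le_const[OF ne]) (auto simp: ind_def)
    finally have a: "\<mu> offdiag \<le> 1" .
    have "- \<mu> offdiag \<le> p (\<lambda>z. (-1) * ind offdiag z)" using psi_p E_sc[OF indE] mu_neg by metis
    also have "\<dots> \<le> -1" unfolding p_def by (rule Sup_le_const[OF ne]) (auto simp: ind_def)
    finally show ?thesis using a by simp
  qed
  have psum: "\<psi> (\<lambda>z. \<Sum>B\<in>F. c B * ind B z) = (\<Sum>B\<in>F. c B * \<mu> B)" if F: "finite F" for F c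
    using F
  proof (induction F rule: finite_induct)
    case empty
    have "(\<lambda>z::'a \<times> 'a. 0::real) \<in> E" unfolding E_def bddS_def by (auto intro!: exI[of _ 0])
    then have "\<psi> (\<lambda>z. 0 * (\<lambda>z. 0) z) = 0 * \<psi> (\<lambda>z. 0)" using psi_sc by (elim allE[of _ 0] ballE) auto
    then show ?case by simp
  next
    case (insert B F)
    have s1: "(\<lambda>z. c B * ind B z) \<in> E" using E_sc[OF indE] .
    have s2: "(\<lambda>z. \<Sum>B\<in>F. c B * ind B z) \<in> E" unfolding E_def
      by (simp add: bddS_sum[OF insert(1)] bddS_scale bddS_ind)
    have "\<psi> (\<lambda>z. \<Sum>B\<in>insert B F. c B * ind B z) = \<psi> (\<lambda>z. c B * ind B z + (\<Sum>B\<in>F. c B * ind B z))"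
      using insert by simp
    also have "\<dots> = \<psi> (\<lambda>z. c B * ind B z) + \<psi> (\<lambda>z. \<Sum>B\<in>F. c B * ind B z)"
      using psi_add[rule_format, OF s1 s2] by simp
    also have "\<psi> (\<lambda>z. c B * ind B z) = c B * \<mu> B" unfolding \<mu>_def using psi_sc indE by blast
    finally show ?case using insert by simp
  qed
  have psi_int: "ba_integral \<mu> h = \<psi> h" if hE: "h \<in> E" for h
  proof (rule int_crit[OF mu, where C = 1])
    show hb: "bddS h" using hE unfolding E_def by simp
    fix \<delta> :: real assume d: "\<delta> > 0"
    obtain K where K: "\<forall>z\<in>offdiag. \<bar>h z\<bar> \<le> K" using hb unfolding bddS_def by blast
    obtain P where P: "is_partition offdiag P" "finep h \<delta> P" using fine_exists[of offdiag h K \<delta>] K d by auto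
    define t where "t = (\<lambda>B. SOME x. x \<in> (B::('a \<times> 'a) set))"
    have tP: "tags P t" unfolding t_def using part_tags[OF P(1)] .
    have finP: "finite P" using P(1) by (simp add: is_partition_def)
    define s where "s = (\<lambda>z. \<Sum>B\<in>P. h (t B) * ind B z)"
    have sE: "s \<in> E" unfolding E_def s_def by (simp add: bddS_sum[OF finP] bddS_scale bddS_ind)
    have psis: "\<psi> s = riem \<mu> h P t" unfolding s_def riem_def using psum[OF finP] .
    define k where "k = (\<lambda>z. h z + (-1) * s z)"
    have kE: "k \<in> E" unfolding k_def using E_add[OF hE E_sc[OF sE]] .
    have kb: "\<bar>k z\<bar> \<le> \<delta>" if z: "z \<in> offdiag" for z
    proof -
      have "z \<in> \<Union>P" using P(1) z by (simp add: is_partition_def)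
      then obtain B0 where B0: "B0 \<in> P" "z \<in> B0" by blast
      have "s z = h (t B0) * ind B0 z + (\<Sum>B\<in>P - {B0}. h (t B) * ind B z)"
        unfolding s_def using sum.remove[OF finP B0(1)] by simp
      also have "(\<Sum>B\<in>P - {B0}. h (t B) * ind B z) = 0"
      proof (rule sum.neutral, rule ballI)
        fix B assume B: "B \<in> P - {B0}"
        have dj: "\<forall>A\<in>P. \<forall>B\<in>P. A \<noteq> B \<longrightarrow> A \<inter> B = {}" using P(1) unfolding is_partition_def by simp
        have "B \<inter> B0 = {}" using dj[rule_format, of B B0] B B0(1) by simp
        then have "z \<notin> B" using B0(2) by blast
        then show "h (t B) * ind B z = 0" by (simp add: ind_def)
      qed
      finally have "s z = h (t B0)" using B0 by (simp add: ind_def)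
      moreover have tB0: "t B0 \<in> B0" using tP B0 by (simp add: tags_def)
      ultimately have "\<bar>h z - s z\<bar> \<le> \<delta>" using P(2)[unfolded finep_def, rule_format, OF B0(1) B0(2) tB0] by simp
      then show ?thesis unfolding k_def by simp
    qed
    have "\<psi> k \<le> \<delta>"
    proof -
      have "\<psi> k \<le> p k" using psi_p kE by blast
      also have "\<dots> \<le> \<delta>" unfolding p_def by (rule Sup_le_const[OF ne]) (use kb abs_le_D1 in blast)
      finally show ?thesis .
    qed
    moreover have "- \<psi> k \<le> \<delta>"
    proof -
      have "\<psi> (\<lambda>z. (-1) * k z) = (-1) * \<psi> k" using psi_sc kE by blast
      then have "- \<psi> k = \<psi> (\<lambda>z. (-1) * k z)" by simp
      also have "\<dots> \<le> p (\<lambda>z. (-1) * k z)" using psi_p E_sc[OF kE] by blast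
      also have "\<dots> \<le> \<delta>" unfolding p_def by (rule Sup_le_const[OF ne]) (use kb abs_le_D2 in force)
      finally show ?thesis .
    qed
    moreover have "\<psi> k = \<psi> h - \<psi> s"
    proof -
      have "\<psi> k = \<psi> h + \<psi> (\<lambda>z. (-1) * s z)" unfolding k_def by (rule psi_add[rule_format, OF hE E_sc[OF sE]])
      also have "\<psi> (\<lambda>z. (-1) * s z) = (-1) * \<psi> s" using psi_sc sE by blast
      finally show ?thesis by simp
    qed
    ultimately have "\<bar>riem \<mu> h P t - \<psi> h\<bar> \<le> 1 * \<delta>" using psis by simp
    then show "\<exists>P t. is_partition offdiag P \<and> finep h \<delta> P \<and> tags P t \<and> \<bar>riem \<mu> h P t - \<psi> h\<bar> \<le> 1 * \<delta>"
      using P tP by blast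
  qed
  have "\<forall>f\<in>Lip0 z0. Phi_star \<mu> f = \<phi> f"
  proof
    fix f assume f: "f \<in> Lip0 z0"
    have "Phi f \<in> E" unfolding E_def using Phi_bddS[OF f] by simp
    then have "Phi_star \<mu> f = \<psi> (Phi f)" unfolding Phi_star_Phi using psi_int by blast
    also have "\<dots> = \<phi> f" using psi_G0 f unfolding G0_def by blast
    finally show "Phi_star \<mu> f = \<phi> f" .
  qed
  then show ?thesis using mu muS by blast
qed

lemma sum_rotate:
  fixes g :: "nat \<Rightarrow> real"
  assumes "k > 0"
  shows "(\<Sum>i<k. g ((i + 1) mod k)) = (\<Sum>i<k. g i)"
proof -
  obtain m where k: "k = Suc m" using assms by (cases k) auto
  have "(\<Sum>i<Suc m. g ((i + 1) mod Suc m)) = (\<Sum>i<m. g ((i + 1) mod Suc m)) + g ((m + 1) mod Suc m)"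
    by simp
  also have "(\<Sum>i<m. g ((i + 1) mod Suc m)) = (\<Sum>i<m. g (Suc i))"
    by (rule sum.cong) auto
  also have "g ((m + 1) mod Suc m) = g 0" by simp
  also have "(\<Sum>i<m. g (Suc i)) + g 0 = (\<Sum>i<Suc m. g i)" by (subst sum.lessThan_Suc_shift) (simp add: add.commute)
  finally show ?thesis using k by simp
qed

lemma cyc_from_fun:
  fixes f :: "'a::metric_space \<Rightarrow> real"
  assumes lip: "\<forall>x y. \<bar>f x - f y\<bar> \<le> dist x y" and T: "\<forall>(x,y)\<in>T. f x - f y \<ge> \<gamma> * dist x y"
  shows "cyc_mono \<gamma> T"
  unfolding cyc_mono_def
proof (intro allI impI)
  fix ps :: "('a \<times> 'a) list" assume ps: "ps \<noteq> [] \<and> set ps \<subseteq> T"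
  define k where "k = length ps"
  have k: "k > 0" using ps unfolding k_def by simp
  define a where "a i = f (snd (ps ! i))" for i
  have trm: "min (dist (fst (ps ! i)) (snd (ps ! ((i + 1) mod k))) - \<gamma> * dist (fst (ps ! i)) (snd (ps ! i)))
                  (dist (snd (ps ! i)) (snd (ps ! ((i + 1) mod k)))) \<ge> a i - a ((i + 1) mod k)"
    if i: "i < k" for i
  proof -
    obtain x y where xy: "ps ! i = (x, y)" by (cases "ps ! i")
    have "ps ! i \<in> T" using ps i unfolding k_def by (meson nth_mem subsetD)
    then have g: "f x - f y \<ge> \<gamma> * dist x y" using T xy by auto
    define y' where "y' = snd (ps ! ((i + 1) mod k))"
    have l1: "f x - f y' \<le> dist x y'" using lip abs_le_D1 by blast
    have l2: "f y - f y' \<le> dist y y'" using lip abs_le_D1 by blast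
    have "a i - a ((i + 1) mod k) = f y - f y'" unfolding a_def y'_def using xy by simp
    moreover have "f y - f y' \<le> dist x y' - \<gamma> * dist x y" using l1 g by linarith
    ultimately show ?thesis using l2 xy unfolding y'_def by simp
  qed
  have "(\<Sum>i<k. a i - a ((i + 1) mod k)) = 0"
    using sum_rotate[OF k, of a] by (simp add: sum_subtractf)
  moreover have "(\<Sum>i<k. a i - a ((i + 1) mod k)) \<le> (\<Sum>i<k. min (dist (fst (ps ! i)) (snd (ps ! ((i + 1) mod k))) - \<gamma> * dist (fst (ps ! i)) (snd (ps ! i)))
                  (dist (snd (ps ! i)) (snd (ps ! ((i + 1) mod k)))))"
    by (rule sum_mono) (use trm in auto)
  ultimately show "0 \<le> (\<Sum>i<length ps. min (dist (fst (ps ! i)) (snd (ps ! ((i + 1) mod length ps))) - \<gamma> * dist (fst (ps ! i)) (snd (ps ! i)))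
                  (dist (snd (ps ! i)) (snd (ps ! ((i + 1) mod length ps)))))"
    unfolding k_def by simp
qed

fun W2 :: "real \<Rightarrow> 'a::metric_space \<Rightarrow> ('a \<times> 'a) list \<Rightarrow> 'a \<Rightarrow> real" where
  "W2 \<gamma> b [] z = dist b z"
| "W2 \<gamma> b ((x, y) # ps) z = W2 \<gamma> b ps x - \<gamma> * dist x y + dist y z"

fun chn :: "real \<Rightarrow> ('a::metric_space \<times> 'a) list \<Rightarrow> real" where
  "chn \<gamma> [] = 0"
| "chn \<gamma> [p] = - \<gamma> * dist (fst p) (snd p)"
| "chn \<gamma> (p # q # r) = dist (fst p) (snd q) - \<gamma> * dist (fst p) (snd p) + chn \<gamma> (q # r)"

lemma W2_chn: "W2 \<gamma> b (p # qs) z = dist (snd p) z + chn \<gamma> (p # qs) + dist b (fst (last (p # qs)))"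
proof (induction qs arbitrary: p z)
  case Nil
  obtain x y where "p = (x, y)" by (cases p)
  then show ?case by simp
next
  case (Cons q r)
  obtain x y where p: "p = (x, y)" by (cases p)
  have "W2 \<gamma> b (p # q # r) z = W2 \<gamma> b (q # r) x - \<gamma> * dist x y + dist y z" using p by simp
  also have "W2 \<gamma> b (q # r) x = dist (snd q) x + chn \<gamma> (q # r) + dist b (fst (last (q # r)))" using Cons.IH .
  finally show ?case using p by (simp add: dist_commute)
qed

lemma chn_sum:
  "ps \<noteq> [] \<Longrightarrow> chn \<gamma> ps = (\<Sum>i < length ps - 1. dist (fst (ps ! i)) (snd (ps ! (i + 1))) - \<gamma> * dist (fst (ps ! i)) (snd (ps ! i)))
      - \<gamma> * dist (fst (last ps)) (snd (last ps))"
proof (induction ps)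
  case Nil then show ?case by simp
next
  case (Cons p qs)
  show ?case
  proof (cases qs)
    case Nil then show ?thesis by simp
  next
    case (Cons q r)
    have IH: "chn \<gamma> (q # r) = (\<Sum>i < length r. dist (fst ((q # r) ! i)) (snd ((q # r) ! (i + 1))) - \<gamma> * dist (fst ((q # r) ! i)) (snd ((q # r) ! i)))
      - \<gamma> * dist (fst (last (q # r))) (snd (last (q # r)))" using Cons.IH Cons by simp
    have "(\<Sum>i < length (p # q # r) - 1. dist (fst ((p # q # r) ! i)) (snd ((p # q # r) ! (i + 1))) - \<gamma> * dist (fst ((p # q # r) ! i)) (snd ((p # q # r) ! i)))
        = (dist (fst p) (snd q) - \<gamma> * dist (fst p) (snd p)) +
          (\<Sum>i < length r. dist (fst ((q # r) ! i)) (snd ((q # r) ! (i + 1))) - \<gamma> * dist (fst ((q # r) ! i)) (snd ((q # r) ! i)))"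
      by (simp add: sum.lessThan_Suc_shift del: sum.lessThan_Suc)
    then show ?thesis using IH Cons by simp
  qed
qed

lemma cyc_sum:
  assumes "ps \<noteq> []"
  shows "(\<Sum>i<length ps. dist (fst (ps ! i)) (snd (ps ! ((i + 1) mod length ps))) - \<gamma> * dist (fst (ps ! i)) (snd (ps ! i)))
     = chn \<gamma> ps + dist (fst (last ps)) (snd (hd ps))"
proof -
  obtain m where m: "length ps = Suc m" using assms by (cases "length ps") auto
  have "(\<Sum>i<Suc m. dist (fst (ps ! i)) (snd (ps ! ((i + 1) mod Suc m))) - \<gamma> * dist (fst (ps ! i)) (snd (ps ! i)))
     = (\<Sum>i<m. dist (fst (ps ! i)) (snd (ps ! ((i + 1) mod Suc m))) - \<gamma> * dist (fst (ps ! i)) (snd (ps ! i)))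
       + (dist (fst (ps ! m)) (snd (ps ! ((m + 1) mod Suc m))) - \<gamma> * dist (fst (ps ! m)) (snd (ps ! m)))" by simp
  also have "(\<Sum>i<m. dist (fst (ps ! i)) (snd (ps ! ((i + 1) mod Suc m))) - \<gamma> * dist (fst (ps ! i)) (snd (ps ! i)))
     = (\<Sum>i<m. dist (fst (ps ! i)) (snd (ps ! (i + 1))) - \<gamma> * dist (fst (ps ! i)) (snd (ps ! i)))"
    by (rule sum.cong) auto
  also have "ps ! m = last ps" using m assms by (simp add: last_conv_nth)
  also have "ps ! ((m + 1) mod Suc m) = hd ps" using assms by (simp add: hd_conv_nth)
  finally show ?thesis using chn_sum[OF assms, of \<gamma>] m by simp
qed

lemma W2_lower:
  assumes cm: "cyc_mono \<gamma> T" and ps: "set ps \<subseteq> T"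
  shows "W2 \<gamma> b ps z \<ge> - dist z b"
proof (cases ps)
  case Nil then show ?thesis using zero_le_dist[of b z] by (simp add: dist_commute)
next
  case (Cons p qs)
  have "0 \<le> (\<Sum>i<length ps. min (dist (fst (ps ! i)) (snd (ps ! ((i + 1) mod length ps))) - \<gamma> * dist (fst (ps ! i)) (snd (ps ! i)))
                  (dist (snd (ps ! i)) (snd (ps ! ((i + 1) mod length ps)))))"
    using cm ps Cons unfolding cyc_mono_def by blast
  also have "\<dots> \<le> (\<Sum>i<length ps. dist (fst (ps ! i)) (snd (ps ! ((i + 1) mod length ps))) - \<gamma> * dist (fst (ps ! i)) (snd (ps ! i)))"
    by (rule sum_mono) simp
  also have "\<dots> = chn \<gamma> ps + dist (fst (last ps)) (snd (hd ps))" using cyc_sum Cons by blast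
  finally have c: "0 \<le> chn \<gamma> ps + dist (fst (last ps)) (snd (hd ps))" .
  have w: "W2 \<gamma> b ps z = dist (snd p) z + chn \<gamma> ps + dist b (fst (last ps))" unfolding Cons by (rule W2_chn)
  have t1: "dist (fst (last ps)) (snd p) \<le> dist (fst (last ps)) b + dist b (snd p)" by (rule dist_triangle)
  have t2: "dist b (snd p) \<le> dist b z + dist z (snd p)" by (rule dist_triangle)
  have "dist (fst (last ps)) (snd p) \<le> dist (fst (last ps)) b + dist b z + dist z (snd p)"
    using t1 t2 by linarith
  then show ?thesis using c w Cons by (simp add: dist_commute)
qed

lemma W2_mono: "W2 \<gamma> b ps z' \<le> W2 \<gamma> b ps z + dist z z'"
proof (cases ps)
  case Nil then show ?thesis using dist_triangle[of b z' z] by (simp add: dist_commute)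
next
  case (Cons p qs)
  obtain x y where "p = (x, y)" by (cases p)
  then show ?thesis using Cons dist_triangle[of y z' z] by (simp add: dist_commute)
qed

lemma fun_from_cyc:
  fixes z0 :: "'a::metric_space"
  assumes cm: "cyc_mono \<gamma> T"
  shows "\<exists>f. f \<in> Lip0 z0 \<and> lipnorm f \<le> 1 \<and> (\<forall>x y. \<bar>f x - f y\<bar> \<le> dist x y) \<and> (\<forall>(x,y)\<in>T. f x - f y \<ge> \<gamma> * dist x y)"
proof -
  define W where "W z = {W2 \<gamma> z0 ps z | ps. set ps \<subseteq> T}" for z
  define F where "F z = Inf (W z)" for z
  have Wne: "W z \<noteq> {}" for z
  proof -
    have "W2 \<gamma> z0 [] z \<in> W z" unfolding W_def mem_Collect_eq by (rule exI[of _ "[]"]) simp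
    then show ?thesis by blast
  qed
  have Wbdd: "bdd_below (W z)" for z unfolding W_def bdd_below_def
    using W2_lower[OF cm] by blast
  have Fle: "F z \<le> W2 \<gamma> z0 ps z" if "set ps \<subseteq> T" for z ps
    unfolding F_def by (rule cInf_lower[OF _ Wbdd]) (use that in \<open>auto simp: W_def\<close>)
  have F1: "F z' \<le> F z + dist z z'" for z z'
  proof -
    have "F z' - dist z z' \<le> F z" unfolding F_def[of z]
    proof (rule cInf_greatest[OF Wne])
      fix w assume "w \<in> W z"
      then obtain ps where ps: "set ps \<subseteq> T" "w = W2 \<gamma> z0 ps z" unfolding W_def by blast
      have "F z' \<le> W2 \<gamma> z0 ps z'" using Fle[OF ps(1)] .
      also have "\<dots> \<le> W2 \<gamma> z0 ps z + dist z z'" by (rule W2_mono)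
      finally show "F z' - dist z z' \<le> w" using ps by simp
    qed
    then show ?thesis by simp
  qed
  have FT: "F y + \<gamma> * dist x y \<le> F x" if xy: "(x, y) \<in> T" for x y
  proof -
    have "F y + \<gamma> * dist x y \<le> F x" unfolding F_def[of x]
    proof (rule cInf_greatest[OF Wne])
      fix w assume "w \<in> W x"
      then obtain ps where ps: "set ps \<subseteq> T" "w = W2 \<gamma> z0 ps x" unfolding W_def by blast
      have "set ((x, y) # ps) \<subseteq> T" using ps xy by simp
      then have "F y \<le> W2 \<gamma> z0 ((x, y) # ps) y" by (rule Fle)
      then show "F y + \<gamma> * dist x y \<le> w" using ps by simp
    qed
    then show ?thesis .
  qed
  define f where "f z = F z - F z0" for z
  have lip: "\<forall>x y. \<bar>f x - f y\<bar> \<le> dist x y"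
  proof (intro allI)
    fix x y
    have "F x \<le> F y + dist y x" "F y \<le> F x + dist x y" using F1 by auto
    then show "\<bar>f x - f y\<bar> \<le> dist x y" unfolding f_def by (simp add: dist_commute abs_le_iff)
  qed
  have "f \<in> Lip0 z0" unfolding Lip0_def f_def using lip[unfolded f_def] by (auto intro!: exI[of _ 1])
  moreover have "lipnorm f \<le> 1"
    by (rule lipnorm_le) (use lip in \<open>auto simp: divide_le_eq\<close>)
  moreover have "\<forall>(x,y)\<in>T. f x - f y \<ge> \<gamma> * dist x y"
  proof (clarify)
    fix x y assume "(x, y) \<in> T"
    then have "F y + \<gamma> * dist x y \<le> F x" by (rule FT)
    then show "f x - f y \<ge> \<gamma> * dist x y" unfolding f_def by simp
  qed
  ultimately show ?thesis using lip by blast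
qed

lemma comb_eq:
  fixes lam :: "'i \<Rightarrow> real" and f g :: "'i \<Rightarrow> 'a \<Rightarrow> real"
  shows "((\<Sum>i\<in>I. lam i * f i x) - (\<Sum>i\<in>I. lam i * g i x)) - ((\<Sum>i\<in>I. lam i * f i y) - (\<Sum>i\<in>I. lam i * g i y))
   = (\<Sum>i\<in>I. lam i * ((f i x - f i y) - (g i x - g i y)))"
proof -
  have "(\<Sum>i\<in>I. lam i * ((f i x - f i y) - (g i x - g i y)))
     = (\<Sum>i\<in>I. (lam i * f i x - lam i * g i x) - (lam i * f i y - lam i * g i y))"
    by (rule sum.cong) (auto simp: algebra_simps)
  also have "\<dots> = ((\<Sum>i\<in>I. lam i * f i x) - (\<Sum>i\<in>I. lam i * g i x)) - ((\<Sum>i\<in>I. lam i * f i y) - (\<Sum>i\<in>I. lam i * g i y))"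
    by (simp add: sum_subtractf)
  finally show ?thesis by simp
qed

lemma comb_bound:
  fixes f g :: "nat \<Rightarrow> 'a::metric_space \<Rightarrow> real"
  assumes lam: "\<forall>i\<in>I. lam i \<ge> 0" "(\<Sum>i\<in>I. lam i) = 1"
    and f: "\<forall>i\<in>I. f i \<in> Lip0 z0 \<and> lipnorm (f i) \<le> 1" and g: "\<forall>i\<in>I. g i \<in> Lip0 z0 \<and> lipnorm (g i) \<le> 1"
  shows "\<bar>((\<Sum>i\<in>I. lam i * f i x) - (\<Sum>i\<in>I. lam i * g i x)) - ((\<Sum>i\<in>I. lam i * f i y) - (\<Sum>i\<in>I. lam i * g i y))\<bar> \<le> 2 * dist x y"
proof -
  have "\<bar>(\<Sum>i\<in>I. lam i * ((f i x - f i y) - (g i x - g i y)))\<bar> \<le> (\<Sum>i\<in>I. \<bar>lam i * ((f i x - f i y) - (g i x - g i y))\<bar>)"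
    by (rule sum_abs)
  also have "\<dots> \<le> (\<Sum>i\<in>I. lam i * (2 * dist x y))"
  proof (rule sum_mono)
    fix i assume i: "i \<in> I"
    have "\<bar>f i x - f i y\<bar> \<le> dist x y" using f i lip1 by blast
    moreover have "\<bar>g i x - g i y\<bar> \<le> dist x y" using g i lip1 by blast
    ultimately have "\<bar>(f i x - f i y) - (g i x - g i y)\<bar> \<le> 2 * dist x y" by linarith
    then show "\<bar>lam i * ((f i x - f i y) - (g i x - g i y))\<bar> \<le> lam i * (2 * dist x y)"
      using lam(1) i by (simp add: abs_mult mult_left_mono)
  qed
  also have "\<dots> = 2 * dist x y" using lam(2) by (simp add: sum_distrib_right[symmetric])
  finally show ?thesis unfolding comb_eq .
qed

lemma comb_lip:
  fixes f g :: "nat \<Rightarrow> 'a::metric_space \<Rightarrow> real"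
  assumes lam: "\<forall>i\<in>I. lam i \<ge> 0" "(\<Sum>i\<in>I. lam i) = 1"
    and f: "\<forall>i\<in>I. f i \<in> Lip0 z0 \<and> lipnorm (f i) \<le> 1" and g: "\<forall>i\<in>I. g i \<in> Lip0 z0 \<and> lipnorm (g i) \<le> 1"
  shows "lipnorm (\<lambda>x. (\<Sum>i\<in>I. lam i * f i x) - (\<Sum>i\<in>I. lam i * g i x)) \<le> 2"
    and "\<And>x y. \<bar>((\<Sum>i\<in>I. lam i * f i x) - (\<Sum>i\<in>I. lam i * g i x)) - ((\<Sum>i\<in>I. lam i * f i y) - (\<Sum>i\<in>I. lam i * g i y))\<bar> \<le> 2 * dist x y"
proof -
  show b: "\<And>x y. \<bar>((\<Sum>i\<in>I. lam i * f i x) - (\<Sum>i\<in>I. lam i * g i x)) - ((\<Sum>i\<in>I. lam i * f i y) - (\<Sum>i\<in>I. lam i * g i y))\<bar> \<le> 2 * dist x y"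
    by (rule comb_bound[OF lam f g])
  show "lipnorm (\<lambda>x. (\<Sum>i\<in>I. lam i * f i x) - (\<Sum>i\<in>I. lam i * g i x)) \<le> 2"
  proof (rule lipnorm_le)
    fix x y :: 'a assume "x \<noteq> y"
    then show "\<bar>((\<Sum>i\<in>I. lam i * f i x) - (\<Sum>i\<in>I. lam i * g i x)) - ((\<Sum>i\<in>I. lam i * f i y) - (\<Sum>i\<in>I. lam i * g i y))\<bar> / dist x y \<le> 2"
      using b[of x y] by (simp add: divide_le_eq)
  qed simp
qed

lemma int_two:
  assumes mu: "padd \<mu>" and A: "A \<subseteq> offdiag"
  shows "ba_integral \<mu> (\<lambda>z. a * ind A z + b * ind (offdiag - A) z) = a * \<mu> A + b * (\<mu> offdiag - \<mu> A)"
proof -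
  have "ba_integral \<mu> (\<lambda>z. a * ind A z + b * ind (offdiag - A) z)
      = ba_integral \<mu> (\<lambda>z. a * ind A z) + ba_integral \<mu> (\<lambda>z. b * ind (offdiag - A) z)"
    by (rule int_add[OF mu bddS_scale[OF bddS_ind] bddS_scale[OF bddS_ind]])
  also have "\<dots> = a * \<mu> A + b * \<mu> (offdiag - A)"
    using int_scale[OF mu bddS_ind, of a A] int_scale[OF mu bddS_ind, of b "offdiag - A"]
      int_ind[OF mu A] int_ind[OF mu, of "offdiag - A"] by simp
  also have "\<mu> (offdiag - A) = \<mu> offdiag - \<mu> A"
  proof -
    have "A \<union> (offdiag - A) = offdiag" using A by auto
    then have "\<mu> offdiag = \<mu> A + \<mu> (offdiag - A)" using padd_add[OF mu A, of "offdiag - A"] by auto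
    then show ?thesis by simp
  qed
  finally show ?thesis .
qed

lemma Phi_pair: "Phi f (x, y) = (f x - f y) / dist x y"
  by (simp add: Phi_def)

lemma functional_of_mu:
  fixes \<mu> :: "('a::metric_space \<times> 'a) set \<Rightarrow> real"
  assumes mu: "padd \<mu>" and m1: "\<mu> offdiag = 1"
  shows "is_lip0_functional z0 (Phi_star \<mu>)"
  unfolding is_lip0_functional_def
proof (intro conjI ballI allI)
  fix f g assume f: "f \<in> Lip0 z0" and g: "g \<in> Lip0 z0"
  show "Phi_star \<mu> (\<lambda>x. f x + g x) = Phi_star \<mu> f + Phi_star \<mu> g"
    unfolding Phi_star_Phi Phi_add by (rule int_add[OF mu Phi_bddS[OF f] Phi_bddS[OF g]])
next
  fix c f assume f: "f \<in> Lip0 z0"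
  show "Phi_star \<mu> (\<lambda>x. c * f x) = c * Phi_star \<mu> f"
    unfolding Phi_star_Phi Phi_scale by (rule int_scale[OF mu Phi_bddS[OF f]])
next
  show "\<exists>C. \<forall>f\<in>Lip0 z0. \<bar>Phi_star \<mu> f\<bar> \<le> C * lipnorm f"
  proof (intro exI[of _ 1] ballI)
    fix f assume f: "f \<in> Lip0 z0"
    have "\<bar>ba_integral \<mu> (Phi f)\<bar> \<le> lipnorm f * \<mu> offdiag"
      by (rule int_bound[OF mu Phi_bddS[OF f]]) (use Phi_bound[OF f] in blast)
    then show "\<bar>Phi_star \<mu> f\<bar> \<le> 1 * lipnorm f" using m1 unfolding Phi_star_Phi by simp
  qed
qed

lemma slice_ne:
  assumes phi: "is_lip0_functional z0 \<phi>" and dn: "dual_norm z0 \<phi> = 1" and a: "\<alpha> > 0"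
  shows "\<exists>f. f \<in> slice z0 \<phi> \<alpha>"
proof -
  define D where "D = {\<bar>\<phi> f\<bar> | f. f \<in> Lip0 z0 \<and> lipnorm f \<le> 1}"
  have "(\<lambda>x. 0) \<in> Lip0 z0" by (rule Lip0_zero)
  moreover have "lipnorm (\<lambda>x::'a. 0::real) \<le> 1" by (rule lipnorm_le) auto
  ultimately have Dne: "D \<noteq> {}" unfolding D_def by blast
  have "\<exists>v\<in>D. v > 1 - \<alpha>"
  proof (rule ccontr)
    assume "\<not> (\<exists>v\<in>D. v > 1 - \<alpha>)"
    then have "Sup D \<le> 1 - \<alpha>" by (intro cSup_least[OF Dne]) auto
    then show False using dn a unfolding dual_norm_def D_def by simp
  qed
  then obtain f where f: "f \<in> Lip0 z0" "lipnorm f \<le> 1" "\<bar>\<phi> f\<bar> > 1 - \<alpha>" unfolding D_def by blast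
  show ?thesis
  proof (cases "\<phi> f \<ge> 0")
    case True
    then show ?thesis using f unfolding slice_def by auto
  next
    case False
    have sc: "\<phi> (\<lambda>x. (-1) * f x) = (-1) * \<phi> f" using phi f(1) unfolding is_lip0_functional_def by blast
    have "(\<lambda>x. (-1) * f x) \<in> Lip0 z0" by (rule Lip0_scale[OF f(1)])
    moreover have "lipnorm (\<lambda>x. (-1) * f x) \<le> 1"
    proof (rule lipnorm_le)
      fix x y :: 'a assume xy: "x \<noteq> y"
      have "\<bar>f x - f y\<bar> \<le> dist x y" using lip1[OF f(1,2)] .
      then have "\<bar>(-1) * f x - (-1) * f y\<bar> \<le> dist x y" by simp
      then show "\<bar>(-1) * f x - (-1) * f y\<bar> / dist x y \<le> 1" using xy by (simp add: divide_le_eq)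
    qed simp
    moreover have "\<phi> (\<lambda>x. (-1) * f x) > 1 - \<alpha>" using sc f(3) False by simp
    ultimately show ?thesis unfolding slice_def by blast
  qed
qed

lemma dir1:
  fixes z0 :: "'a::metric_space" and \<mu> :: "nat \<Rightarrow> ('a \<times> 'a) set \<Rightarrow> real"
  assumes sd: "SD2P z0" and n: "n \<ge> 1"
    and mu: "\<forall>i\<in>{1..n}. is_ba (\<mu> i) \<and> optimal z0 (\<mu> i) \<and> ba_norm (\<mu> i) = 1"
    and g: "0 < \<gamma>" "\<gamma> < 1"
  shows "\<exists>(A :: nat \<Rightarrow> ('a \<times> 'a) set) u v. u \<noteq> v \<and>
             (\<forall>i\<in>{1..n}. A i \<subseteq> offdiag \<and> \<mu> i (A i) \<ge> \<gamma> \<and>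
                cyc_mono \<gamma> (A i \<union> {(u, v)}) \<and> cyc_mono \<gamma> (A i \<union> {(v, u)}))"
proof -
  have pm: "padd (\<mu> i)" "\<mu> i offdiag = 1" if i: "i \<in> {1..n}" for i
  proof -
    have b: "is_ba (\<mu> i)" "optimal z0 (\<mu> i)" "ba_norm (\<mu> i) = 1" using mu i by auto
    show p: "padd (\<mu> i)" using b(1,2) unfolding padd_def is_ba_def optimal_def ba_positive_def by blast
    show "\<mu> i offdiag = 1" using padd_is_ba(2)[OF p] b(3) by simp
  qed
  define \<phi> where "\<phi> i = Phi_star (\<mu> i)" for i
  have phi: "is_lip0_functional z0 (\<phi> i)" "dual_norm z0 (\<phi> i) = 1" if i: "i \<in> {1..n}" for i
  proof -
    show "is_lip0_functional z0 (\<phi> i)" unfolding \<phi>_def by (rule functional_of_mu[OF pm[OF i]])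
    show "dual_norm z0 (\<phi> i) = 1" using mu i unfolding \<phi>_def optimal_def by auto
  qed
  define lam where "lam i = 1 / real n" for i :: nat
  define \<alpha> where "\<alpha> i = (1 - \<gamma>)^2 / 2" for i :: nat
  have a: "\<alpha> i > 0" for i unfolding \<alpha>_def using g by simp
  have lam0: "\<forall>i\<in>{1..n}. lam i \<ge> 0" unfolding lam_def by simp
  have lam1: "(\<Sum>i\<in>{1..n}. lam i) = 1" unfolding lam_def using n by simp
  define G where "G = {g. \<exists>f :: nat \<Rightarrow> 'a \<Rightarrow> real. (\<forall>i\<in>{1..n}. f i \<in> slice z0 (\<phi> i) (\<alpha> i)) \<and>
                          g = (\<lambda>x. \<Sum>i\<in>{1..n}. lam i * f i x)}"
  define X where "X = {lipnorm (\<lambda>x. g x - h x) | g h. g \<in> G \<and> h \<in> G}"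
  have c: "(\<forall>i\<in>{1..n}. lam i \<ge> 0) \<and> (\<Sum>i\<in>{1..n}. lam i) = 1 \<and>
          (\<forall>i\<in>{1..n}. is_lip0_functional z0 (\<phi> i) \<and> dual_norm z0 (\<phi> i) = 1 \<and> \<alpha> i > 0)"
    using lam0 lam1 phi a by blast
  have "lip_diam G = 2" unfolding G_def by (rule sd[unfolded SD2P_def, rule_format, OF n c])
  then have SX: "Sup X = 2" unfolding lip_diam_def X_def .
  have "\<forall>i\<in>{1..n}. \<exists>f. f \<in> slice z0 (\<phi> i) (\<alpha> i)" using slice_ne phi a by blast
  then have "\<exists>f. \<forall>i\<in>{1..n}. f i \<in> slice z0 (\<phi> i) (\<alpha> i)" by (rule bchoice)
  then obtain f0 where f0: "\<forall>i\<in>{1..n}. f0 i \<in> slice z0 (\<phi> i) (\<alpha> i)" ..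
  have "(\<lambda>x. \<Sum>i\<in>{1..n}. lam i * f0 i x) \<in> G" unfolding G_def using f0 by blast
  then have Xne: "X \<noteq> {}" unfolding X_def by blast
  define \<delta> where "\<delta> = (1 - \<gamma>) / real n"
  have d: "\<delta> > 0" "\<delta> \<le> 1" unfolding \<delta>_def using g n by (auto simp: divide_le_eq)
  have "\<exists>v\<in>X. v > 2 - \<delta>"
  proof (rule ccontr)
    assume "\<not> (\<exists>v\<in>X. v > 2 - \<delta>)"
    then have "Sup X \<le> 2 - \<delta>" by (intro cSup_least[OF Xne]) auto
    then show False using SX d by simp
  qed
  then obtain gg hh where gh: "gg \<in> G" "hh \<in> G" "lipnorm (\<lambda>x. gg x - hh x) > 2 - \<delta>" unfolding X_def by blast
  obtain f1 where f1: "\<forall>i\<in>{1..n}. f1 i \<in> slice z0 (\<phi> i) (\<alpha> i)" "gg = (\<lambda>x. \<Sum>i\<in>{1..n}. lam i * f1 i x)"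
    using gh(1) unfolding G_def by blast
  obtain f2 where f2: "\<forall>i\<in>{1..n}. f2 i \<in> slice z0 (\<phi> i) (\<alpha> i)" "hh = (\<lambda>x. \<Sum>i\<in>{1..n}. lam i * f2 i x)"
    using gh(2) unfolding G_def by blast
  have s1: "f1 i \<in> Lip0 z0" "lipnorm (f1 i) \<le> 1" "\<phi> i (f1 i) > 1 - \<alpha> i" if "i \<in> {1..n}" for i
    using f1(1) that unfolding slice_def by auto
  have s2: "f2 i \<in> Lip0 z0" "lipnorm (f2 i) \<le> 1" "\<phi> i (f2 i) > 1 - \<alpha> i" if "i \<in> {1..n}" for i
    using f2(1) that unfolding slice_def by auto
  define D where "D x y = ((\<Sum>i\<in>{1..n}. lam i * f1 i x) - (\<Sum>i\<in>{1..n}. lam i * f2 i x))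
      - ((\<Sum>i\<in>{1..n}. lam i * f1 i y) - (\<Sum>i\<in>{1..n}. lam i * f2 i y))" for x y
  have "\<exists>x y. x \<noteq> y \<and> \<bar>D x y\<bar> / dist x y > 2 - \<delta>"
  proof (rule ccontr)
    assume "\<not> (\<exists>x y. x \<noteq> y \<and> \<bar>D x y\<bar> / dist x y > 2 - \<delta>)"
    then have "lipnorm (\<lambda>x. gg x - hh x) \<le> 2 - \<delta>"
      unfolding f1(2) f2(2) by (intro lipnorm_le) (use d in \<open>auto simp: D_def not_less\<close>)
    then show False using gh(3) by simp
  qed
  then obtain x y where xy: "x \<noteq> y" "\<bar>D x y\<bar> / dist x y > 2 - \<delta>" by blast
  have Dsym: "D y x = - D x y" unfolding D_def by simp
  obtain u v where uv: "u \<noteq> v" "D u v / dist u v > 2 - \<delta>"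
  proof (cases "D x y \<ge> 0")
    case True then show ?thesis using that[of x y] xy by simp
  next
    case False then show ?thesis using that[of y x] xy Dsym by (simp add: dist_commute)
  qed
  have duv: "dist u v > 0" using uv(1) by simp
  define E where "E i = (f1 i u - f1 i v) - (f2 i u - f2 i v)" for i
  have DE: "D u v = (\<Sum>i\<in>{1..n}. lam i * E i)" unfolding D_def E_def by (rule comb_eq)
  also have "\<dots> = (\<Sum>i\<in>{1..n}. E i) / real n" unfolding lam_def by (simp add: sum_divide_distrib)
  finally have DE2: "D u v = (\<Sum>i\<in>{1..n}. E i) / real n" .
  have "D u v > (2 - \<delta>) * dist u v" using uv(2) duv by (simp add: less_divide_eq)
  then have sumE: "(\<Sum>i\<in>{1..n}. E i) > real n * ((2 - \<delta>) * dist u v)" using DE2 n by (simp add: less_divide_eq mult.commute)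
  have l1: "\<bar>f1 i a - f1 i b\<bar> \<le> dist a b" "\<bar>f2 i a - f2 i b\<bar> \<le> dist a b" if "i \<in> {1..n}" for i a b
    using lip1[OF s1(1,2)[OF that]] lip1[OF s2(1,2)[OF that]] by auto
  have Ele: "E i \<le> 2 * dist u v" if "i \<in> {1..n}" for i
    using l1[OF that, of u v] unfolding E_def by (simp add: abs_le_iff)
  have Ej: "E j > (1 + \<gamma>) * dist u v" if j: "j \<in> {1..n}" for j
  proof -
    have "(\<Sum>i\<in>{1..n}. E i) = E j + (\<Sum>i\<in>{1..n} - {j}. E i)" using sum.remove[of "{1..n}" j E] j by simp
    also have "(\<Sum>i\<in>{1..n} - {j}. E i) \<le> real (card ({1..n} - {j})) * (2 * dist u v)"
      by (rule sum_bounded_above) (use Ele in auto)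
    also have "real (card ({1..n} - {j})) = real n - 1" using j n by simp
    finally have "(\<Sum>i\<in>{1..n}. E i) \<le> E j + (real n - 1) * (2 * dist u v)" by simp
    then have "real n * ((2 - \<delta>) * dist u v) < E j + (real n - 1) * (2 * dist u v)" using sumE by linarith
    moreover have "real n * ((2 - \<delta>) * dist u v) = (2 * real n - (1 - \<gamma>)) * dist u v"
    proof -
      have nz: "real n \<noteq> 0" using n by simp
      show ?thesis unfolding \<delta>_def using nz by (simp add: field_simps)
    qed
    ultimately show ?thesis by (simp add: algebra_simps)
  qed
  have fu: "f1 j u - f1 j v > \<gamma> * dist u v" "f2 j v - f2 j u > \<gamma> * dist u v" if j: "j \<in> {1..n}" for j
  proof -
    have "f1 j u - f1 j v \<le> dist u v" "f2 j v - f2 j u \<le> dist v u" using l1[OF j, of u v] l1[OF j, of v u] by (auto simp: abs_le_iff)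
    then show "f1 j u - f1 j v > \<gamma> * dist u v" "f2 j v - f2 j u > \<gamma> * dist u v"
      using Ej[OF j] unfolding E_def by (auto simp: dist_commute algebra_simps)
  qed
  define A where "A j = {(x, y). (x, y) \<in> offdiag \<and> f1 j x - f1 j y \<ge> \<gamma> * dist x y \<and> f2 j x - f2 j y \<ge> \<gamma> * dist x y}" for j
  have main: "A j \<subseteq> offdiag \<and> \<mu> j (A j) \<ge> \<gamma> \<and> cyc_mono \<gamma> (A j \<union> {(u, v)}) \<and> cyc_mono \<gamma> (A j \<union> {(v, u)})"
    if j: "j \<in> {1..n}" for j
  proof (intro conjI)
    show AS: "A j \<subseteq> offdiag" unfolding A_def by auto
    show "cyc_mono \<gamma> (A j \<union> {(u, v)})"
      by (rule cyc_from_fun[of "f1 j"]) (use l1[OF j] fu(1)[OF j] in \<open>auto simp: A_def\<close>)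
    show "cyc_mono \<gamma> (A j \<union> {(v, u)})"
      by (rule cyc_from_fun[of "f2 j"]) (use l1[OF j] fu(2)[OF j] in \<open>auto simp: A_def dist_commute\<close>)
    have mj: "padd (\<mu> j)" "\<mu> j offdiag = 1" using pm[OF j] by auto
    define h where "h = (\<lambda>z. Phi (f1 j) z + Phi (f2 j) z)"
    define h' where "h' = (\<lambda>z. 2 * ind (A j) z + (1 + \<gamma>) * ind (offdiag - A j) z)"
    have hb: "bddS h" unfolding h_def by (rule bddS_add[OF Phi_bddS[OF s1(1)[OF j]] Phi_bddS[OF s2(1)[OF j]]])
    have hb': "bddS h'" unfolding h'_def by (rule bddS_add[OF bddS_scale[OF bddS_ind] bddS_scale[OF bddS_ind]])
    have int_h: "ba_integral (\<mu> j) h = \<phi> j (f1 j) + \<phi> j (f2 j)"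
      unfolding h_def \<phi>_def Phi_star_Phi by (rule int_add[OF mj(1) Phi_bddS[OF s1(1)[OF j]] Phi_bddS[OF s2(1)[OF j]]])
    have int_h': "ba_integral (\<mu> j) h' = 2 * \<mu> j (A j) + (1 + \<gamma>) * (1 - \<mu> j (A j))"
      unfolding h'_def using int_two[OF mj(1) AS, of 2 "1 + \<gamma>"] mj(2) by simp
    have le: "\<forall>z\<in>offdiag. h z \<le> h' z"
    proof
      fix z :: "'a \<times> 'a" assume z: "z \<in> offdiag"
      obtain x y where zxy: "z = (x, y)" "x \<noteq> y" using z by (cases z) (auto simp: offdiag_def)
      have dxy: "dist x y > 0" using zxy by simp
      have p1: "Phi (f1 j) z \<le> 1" "Phi (f2 j) z \<le> 1"
        using l1[OF j, of x y] dxy unfolding zxy(1) Phi_pair by (auto simp: divide_le_eq abs_le_iff)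
      show "h z \<le> h' z"
      proof (cases "z \<in> A j")
        case True
        then show ?thesis using p1 unfolding h_def h'_def ind_def by auto
      next
        case False
        then have "f1 j x - f1 j y < \<gamma> * dist x y \<or> f2 j x - f2 j y < \<gamma> * dist x y"
          using z zxy unfolding A_def by auto
        then have "Phi (f1 j) z < \<gamma> \<or> Phi (f2 j) z < \<gamma>"
          using dxy unfolding zxy(1) Phi_pair by (auto simp: divide_less_eq)
        then have "h z < 1 + \<gamma>" using p1 unfolding h_def by auto
        then show ?thesis using False z unfolding h'_def ind_def by auto
      qed
    qed
    have "ba_integral (\<mu> j) h \<le> ba_integral (\<mu> j) h'" by (rule int_mono[OF mj(1) hb hb' le])
    moreover have "\<phi> j (f1 j) + \<phi> j (f2 j) > 2 - 2 * \<alpha> j" using s1(3)[OF j] s2(3)[OF j] by simp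
    ultimately have ineq: "2 - 2 * \<alpha> j < 2 * \<mu> j (A j) + (1 + \<gamma>) * (1 - \<mu> j (A j))" using int_h int_h' by simp
    have "(1 - \<gamma>) * \<gamma> < (1 - \<gamma>) * \<mu> j (A j)"
    proof -
      have e1: "2 * \<alpha> j = 1 - 2 * \<gamma> + \<gamma> * \<gamma>" unfolding \<alpha>_def by (simp add: power2_eq_square field_simps)
      have e2: "(1 + \<gamma>) * (1 - \<mu> j (A j)) = 1 + \<gamma> - \<mu> j (A j) - \<gamma> * \<mu> j (A j)" by (simp add: algebra_simps)
      have e3: "(1 - \<gamma>) * \<gamma> = \<gamma> - \<gamma> * \<gamma>" "(1 - \<gamma>) * \<mu> j (A j) = \<mu> j (A j) - \<gamma> * \<mu> j (A j)"
        by (simp_all add: algebra_simps)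
      show ?thesis unfolding e3 using ineq unfolding e2 using e1 by (smt (verit))
    qed
    then show "\<mu> j (A j) \<ge> \<gamma>" using g by (simp add: mult_less_cancel_left_pos)
  qed
  show ?thesis using uv(1) main by blast
qed

lemma offdiag_empty_Lip0:
  fixes z0 :: "'a::metric_space"
  assumes "(offdiag :: ('a \<times> 'a) set) = {}" "f \<in> Lip0 z0"
  shows "f = (\<lambda>x. 0)"
proof
  fix x :: 'a
  have "x = z0" using assms(1) unfolding offdiag_def by auto
  then show "f x = 0" using assms(2) by (simp add: Lip0_def)
qed

lemma dir2:
  fixes z0 :: "'a::metric_space"
  assumes R: "\<forall>n::nat. n \<ge> 1 \<longrightarrow>
      (\<forall>\<mu> :: nat \<Rightarrow> ('a \<times> 'a) set \<Rightarrow> real.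
        (\<forall>i\<in>{1..n}. is_ba (\<mu> i) \<and> optimal z0 (\<mu> i) \<and> ba_norm (\<mu> i) = 1) \<longrightarrow>
        (\<forall>\<gamma>::real. 0 < \<gamma> \<and> \<gamma> < 1 \<longrightarrow>
          (\<exists>(A :: nat \<Rightarrow> ('a \<times> 'a) set) u v. u \<noteq> v \<and>
             (\<forall>i\<in>{1..n}. A i \<subseteq> offdiag \<and> \<mu> i (A i) \<ge> \<gamma> \<and>
                cyc_mono \<gamma> (A i \<union> {(u, v)}) \<and> cyc_mono \<gamma> (A i \<union> {(v, u)})))))"
  shows "SD2P z0"
  unfolding SD2P_def
proof (intro allI impI)
  fix n :: nat and lam :: "nat \<Rightarrow> real" and \<phi> :: "nat \<Rightarrow> ('a \<Rightarrow> real) \<Rightarrow> real" and \<alpha> :: "nat \<Rightarrow> real"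
  assume n: "n \<ge> 1" and c: "(\<forall>i\<in>{1..n}. lam i \<ge> 0) \<and> (\<Sum>i\<in>{1..n}. lam i) = 1 \<and>
          (\<forall>i\<in>{1..n}. is_lip0_functional z0 (\<phi> i) \<and> dual_norm z0 (\<phi> i) = 1 \<and> \<alpha> i > 0)"
  have lam0: "\<forall>i\<in>{1..n}. lam i \<ge> 0" and lam1: "(\<Sum>i\<in>{1..n}. lam i) = 1"
    and phi: "\<And>i. i \<in> {1..n} \<Longrightarrow> is_lip0_functional z0 (\<phi> i)"
    and dn: "\<And>i. i \<in> {1..n} \<Longrightarrow> dual_norm z0 (\<phi> i) = 1"
    and apos: "\<And>i. i \<in> {1..n} \<Longrightarrow> \<alpha> i > 0" using c by auto
  have one: "1 \<in> {1..n}" using n by simp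
  define G where "G = {g. \<exists>f :: nat \<Rightarrow> 'a \<Rightarrow> real. (\<forall>i\<in>{1..n}. f i \<in> slice z0 (\<phi> i) (\<alpha> i)) \<and>
                          g = (\<lambda>x. \<Sum>i\<in>{1..n}. lam i * f i x)}"
  define X where "X = {lipnorm (\<lambda>x. g x - h x) | g h. g \<in> G \<and> h \<in> G}"
  show "lip_diam {g. \<exists>f :: nat \<Rightarrow> 'a \<Rightarrow> real. (\<forall>i\<in>{1..n}. f i \<in> slice z0 (\<phi> i) (\<alpha> i)) \<and>
                          g = (\<lambda>x. \<Sum>i\<in>{1..n}. lam i * f i x)} = 2"
  proof (cases "(offdiag :: ('a \<times> 'a) set) = {}")
    case True
    have z: "\<phi> 1 (\<lambda>x. 0) = 0"
    proof -
      have sc: "\<forall>c. \<forall>f\<in>Lip0 z0. \<phi> 1 (\<lambda>x. c * f x) = c * \<phi> 1 f"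
        using phi[OF one] unfolding is_lip0_functional_def by blast
      have "\<phi> 1 (\<lambda>x. 0 * (\<lambda>x. 0) x) = 0 * \<phi> 1 (\<lambda>x. 0)" by (rule sc[rule_format, OF Lip0_zero])
      then show ?thesis by simp
    qed
    have "{\<bar>\<phi> 1 f\<bar> | f. f \<in> Lip0 z0 \<and> lipnorm f \<le> 1} = {0}"
    proof
      show "{\<bar>\<phi> 1 f\<bar> | f. f \<in> Lip0 z0 \<and> lipnorm f \<le> 1} \<subseteq> {0}"
        using offdiag_empty_Lip0[OF True] z by auto
      have "lipnorm (\<lambda>x::'a. 0::real) \<le> 1" by (rule lipnorm_le) auto
      then show "{0} \<subseteq> {\<bar>\<phi> 1 f\<bar> | f. f \<in> Lip0 z0 \<and> lipnorm f \<le> 1}"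
        using Lip0_zero z by force
    qed
    then have "dual_norm z0 (\<phi> 1) = 0" unfolding dual_norm_def by simp
    then show ?thesis using dn[OF one] by simp
  next
    case False
    have "\<forall>i\<in>{1..n}. \<exists>\<mu> :: ('a \<times> 'a) set \<Rightarrow> real. padd \<mu> \<and> \<mu> offdiag = 1 \<and> (\<forall>f\<in>Lip0 z0. Phi_star \<mu> f = \<phi> i f)"
      using represent[OF False phi dn] by blast
    then have "\<exists>M. \<forall>i\<in>{1..n}. padd (M i) \<and> M i offdiag = 1 \<and> (\<forall>f\<in>Lip0 z0. Phi_star (M i) f = \<phi> i f)"
      by (rule bchoice)
    then obtain M :: "nat \<Rightarrow> ('a \<times> 'a) set \<Rightarrow> real"
      where M: "\<forall>i\<in>{1..n}. padd (M i) \<and> M i offdiag = 1 \<and> (\<forall>f\<in>Lip0 z0. Phi_star (M i) f = \<phi> i f)" ..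
    have Mp: "padd (M i)" "M i offdiag = 1" "\<And>f. f \<in> Lip0 z0 \<Longrightarrow> Phi_star (M i) f = \<phi> i f"
      if "i \<in> {1..n}" for i using M that by auto
    have Mprops: "\<forall>i\<in>{1..n}. is_ba (M i) \<and> optimal z0 (M i) \<and> ba_norm (M i) = 1"
    proof
      fix i assume i: "i \<in> {1..n}"
      have dn_eq: "dual_norm z0 (Phi_star (M i)) = dual_norm z0 (\<phi> i)"
        unfolding dual_norm_def by (intro arg_cong[where f = Sup] Collect_cong) (use Mp(3)[OF i] in metis)
      show "is_ba (M i) \<and> optimal z0 (M i) \<and> ba_norm (M i) = 1"
        using padd_is_ba[OF Mp(1)[OF i]] Mp(2)[OF i] dn_eq dn[OF i] padd_pos[OF Mp(1)[OF i]]
        unfolding optimal_def ba_positive_def by simp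
    qed
    define am where "am = Min (\<alpha> ` {1..n})"
    have am: "am > 0" "\<And>i. i \<in> {1..n} \<Longrightarrow> am \<le> \<alpha> i"
      unfolding am_def using apos one by auto
    define \<gamma>0 where "\<gamma>0 = 1 - min am 1 / 3"
    have g0: "\<gamma>0 < 1" "\<gamma>0 \<ge> 2/3" unfolding \<gamma>0_def using am(1) by auto
    have Gsl: "f i \<in> Lip0 z0 \<and> lipnorm (f i) \<le> 1" if "\<forall>i\<in>{1..n}. f i \<in> slice z0 (\<phi> i) (\<alpha> i)" "i \<in> {1..n}" for f i
      using that unfolding slice_def by auto
    have Xle: "v \<le> 2" if vX: "v \<in> X" for v
    proof -
      obtain g h where gh: "g \<in> G" "h \<in> G" "v = lipnorm (\<lambda>x. g x - h x)" using vX unfolding X_def by blast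
      obtain f1 where f1: "\<forall>i\<in>{1..n}. f1 i \<in> slice z0 (\<phi> i) (\<alpha> i)" "g = (\<lambda>x. \<Sum>i\<in>{1..n}. lam i * f1 i x)"
        using gh(1) unfolding G_def by blast
      obtain f2 where f2: "\<forall>i\<in>{1..n}. f2 i \<in> slice z0 (\<phi> i) (\<alpha> i)" "h = (\<lambda>x. \<Sum>i\<in>{1..n}. lam i * f2 i x)"
        using gh(2) unfolding G_def by blast
      show ?thesis unfolding gh(3) f1(2) f2(2)
        by (rule comb_lip(1)[OF lam0 lam1, of f1 z0 f2]) (use Gsl[OF f1(1)] Gsl[OF f2(1)] in auto)
    qed
    have key: "\<exists>v\<in>X. v \<ge> 2 * \<gamma>" if gam: "\<gamma>0 < \<gamma>" "\<gamma> < 1" for \<gamma>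
    proof -
      have gpos: "0 < \<gamma>" using gam g0 by linarith
      obtain A :: "nat \<Rightarrow> ('a \<times> 'a) set" and u v where Auv: "u \<noteq> v"
        "\<forall>i\<in>{1..n}. A i \<subseteq> offdiag \<and> M i (A i) \<ge> \<gamma> \<and> cyc_mono \<gamma> (A i \<union> {(u, v)}) \<and> cyc_mono \<gamma> (A i \<union> {(v, u)})"
        using R[THEN spec[of _ n], THEN mp, OF n, THEN spec[of _ M], THEN mp, OF Mprops, THEN spec[of _ \<gamma>], THEN mp]
          gpos gam(2) by blast
      have "\<forall>i\<in>{1..n}. \<exists>f. f \<in> Lip0 z0 \<and> lipnorm f \<le> 1 \<and> (\<forall>x y. \<bar>f x - f y\<bar> \<le> dist x y) \<and>
              (\<forall>(x,y)\<in>A i \<union> {(u, v)}. f x - f y \<ge> \<gamma> * dist x y)"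
        using fun_from_cyc Auv(2) by blast
      then have "\<exists>F. \<forall>i\<in>{1..n}. F i \<in> Lip0 z0 \<and> lipnorm (F i) \<le> 1 \<and> (\<forall>x y. \<bar>F i x - F i y\<bar> \<le> dist x y) \<and>
              (\<forall>(x,y)\<in>A i \<union> {(u, v)}. F i x - F i y \<ge> \<gamma> * dist x y)" by (rule bchoice)
      then obtain F where F: "\<forall>i\<in>{1..n}. F i \<in> Lip0 z0 \<and> lipnorm (F i) \<le> 1 \<and> (\<forall>x y. \<bar>F i x - F i y\<bar> \<le> dist x y) \<and>
              (\<forall>(x,y)\<in>A i \<union> {(u, v)}. F i x - F i y \<ge> \<gamma> * dist x y)" ..
      have "\<forall>i\<in>{1..n}. \<exists>f. f \<in> Lip0 z0 \<and> lipnorm f \<le> 1 \<and> (\<forall>x y. \<bar>f x - f y\<bar> \<le> dist x y) \<and>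
              (\<forall>(x,y)\<in>A i \<union> {(v, u)}. f x - f y \<ge> \<gamma> * dist x y)"
        using fun_from_cyc Auv(2) by blast
      then have "\<exists>F. \<forall>i\<in>{1..n}. F i \<in> Lip0 z0 \<and> lipnorm (F i) \<le> 1 \<and> (\<forall>x y. \<bar>F i x - F i y\<bar> \<le> dist x y) \<and>
              (\<forall>(x,y)\<in>A i \<union> {(v, u)}. F i x - F i y \<ge> \<gamma> * dist x y)" by (rule bchoice)
      then obtain H where H: "\<forall>i\<in>{1..n}. H i \<in> Lip0 z0 \<and> lipnorm (H i) \<le> 1 \<and> (\<forall>x y. \<bar>H i x - H i y\<bar> \<le> dist x y) \<and>
              (\<forall>(x,y)\<in>A i \<union> {(v, u)}. H i x - H i y \<ge> \<gamma> * dist x y)" ..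
      have inslice: "K i \<in> slice z0 (\<phi> i) (\<alpha> i)"
        if i: "i \<in> {1..n}" and K: "K i \<in> Lip0 z0" "lipnorm (K i) \<le> 1" "\<forall>x y. \<bar>K i x - K i y\<bar> \<le> dist x y"
          "\<forall>(x,y)\<in>A i. K i x - K i y \<ge> \<gamma> * dist x y" for K i
      proof -
        have AS: "A i \<subseteq> offdiag" and mA: "M i (A i) \<ge> \<gamma>" using Auv(2) i by auto
        have "\<phi> i (K i) = ba_integral (M i) (Phi (K i))" using Mp(3)[OF i K(1)] unfolding Phi_star_Phi by simp
        also have "ba_integral (M i) (\<lambda>z. \<gamma> * ind (A i) z + (-1) * ind (offdiag - A i) z) \<le> ba_integral (M i) (Phi (K i))"
        proof (rule int_mono[OF Mp(1)[OF i]])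
          show "bddS (\<lambda>z. \<gamma> * ind (A i) z + (-1) * ind (offdiag - A i) z)"
            by (rule bddS_add[OF bddS_scale[OF bddS_ind] bddS_scale[OF bddS_ind]])
          show "bddS (Phi (K i))" by (rule Phi_bddS[OF K(1)])
          show "\<forall>z\<in>offdiag. \<gamma> * ind (A i) z + (-1) * ind (offdiag - A i) z \<le> Phi (K i) z"
          proof
            fix z :: "'a \<times> 'a" assume z: "z \<in> offdiag"
            obtain x y where zxy: "z = (x, y)" "x \<noteq> y" using z by (cases z) (auto simp: offdiag_def)
            have dxy: "dist x y > 0" using zxy by simp
            show "\<gamma> * ind (A i) z + (-1) * ind (offdiag - A i) z \<le> Phi (K i) z"
            proof (cases "z \<in> A i")
              case True
              then have "K i x - K i y \<ge> \<gamma> * dist x y" using K(4) zxy by auto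
              then have "Phi (K i) z \<ge> \<gamma>" using dxy unfolding zxy(1) Phi_pair by (simp add: le_divide_eq)
              then show ?thesis using True by (simp add: ind_def)
            next
              case False
              have "\<bar>K i x - K i y\<bar> \<le> dist x y" using K(3) by blast
              then have "Phi (K i) z \<ge> -1" using dxy unfolding zxy(1) Phi_pair by (simp add: le_divide_eq abs_le_iff)
              then show ?thesis using False z by (simp add: ind_def)
            qed
          qed
        qed
        moreover have "ba_integral (M i) (\<lambda>z. \<gamma> * ind (A i) z + (-1) * ind (offdiag - A i) z) = \<gamma> * M i (A i) + (-1) * (1 - M i (A i))"
          using int_two[OF Mp(1)[OF i] AS, of \<gamma> "-1"] Mp(2)[OF i] by simp
        ultimately have ge: "\<phi> i (K i) \<ge> (1 + \<gamma>) * M i (A i) - 1" by (simp add: algebra_simps)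
        have "(1 + \<gamma>) * \<gamma> \<le> (1 + \<gamma>) * M i (A i)" using mA gpos by (intro mult_left_mono) auto
        moreover have "3 * (1 - \<gamma>) < \<alpha> i"
        proof -
          obtain m where m: "m = min am 1" by blast
          have "1 - m / 3 < \<gamma>" using gam(1) unfolding \<gamma>0_def m by simp
          then have "3 - m < 3 * \<gamma>" by (simp add: field_simps)
          then have "3 * (1 - \<gamma>) < m" by (simp add: algebra_simps)
          then have "3 * (1 - \<gamma>) < min am 1" unfolding m .
          moreover have "min am 1 \<le> am" by simp
          ultimately show ?thesis using am(2)[OF i] by linarith
        qed
        moreover have "0 \<le> (1 - \<gamma>) * (1 - \<gamma>)" by simp
        moreover have "(1 + \<gamma>) * \<gamma> = (1 - \<gamma>) * (1 - \<gamma>) + 3 * \<gamma> - 1" by (simp add: algebra_simps)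
        moreover have "3 * (1 - \<gamma>) = 3 - 3 * \<gamma>" by simp
        ultimately have "\<phi> i (K i) > 1 - \<alpha> i" using ge by linarith
        then show ?thesis unfolding slice_def using K by blast
      qed
      have Fs: "\<forall>i\<in>{1..n}. F i \<in> slice z0 (\<phi> i) (\<alpha> i)"
        using inslice[of _ F] F by blast
      have Hs: "\<forall>i\<in>{1..n}. H i \<in> slice z0 (\<phi> i) (\<alpha> i)"
        using inslice[of _ H] H by blast
      define g where "g = (\<lambda>x. \<Sum>i\<in>{1..n}. lam i * F i x)"
      define h where "h = (\<lambda>x. \<Sum>i\<in>{1..n}. lam i * H i x)"
      have gG: "g \<in> G" unfolding G_def g_def using Fs by blast
      have hG: "h \<in> G" unfolding G_def h_def using Hs by blast
      have FL: "\<forall>i\<in>{1..n}. F i \<in> Lip0 z0 \<and> lipnorm (F i) \<le> 1" using F by blast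
      have HL: "\<forall>i\<in>{1..n}. H i \<in> Lip0 z0 \<and> lipnorm (H i) \<le> 1" using H by blast
      have duv: "dist u v > 0" using Auv(1) by simp
      define D where "D = ((\<Sum>i\<in>{1..n}. lam i * F i u) - (\<Sum>i\<in>{1..n}. lam i * H i u))
          - ((\<Sum>i\<in>{1..n}. lam i * F i v) - (\<Sum>i\<in>{1..n}. lam i * H i v))"
      have "D = (\<Sum>i\<in>{1..n}. lam i * ((F i u - F i v) - (H i u - H i v)))" unfolding D_def by (rule comb_eq)
      also have "\<dots> \<ge> (\<Sum>i\<in>{1..n}. lam i * (2 * \<gamma> * dist u v))"
      proof (rule sum_mono)
        fix i assume i: "i \<in> {1..n}"
        have "F i u - F i v \<ge> \<gamma> * dist u v" using F i by auto
        moreover have "H i v - H i u \<ge> \<gamma> * dist v u" using H i by auto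
        ultimately have "(F i u - F i v) - (H i u - H i v) \<ge> 2 * \<gamma> * dist u v" by (simp add: dist_commute)
        then show "lam i * (2 * \<gamma> * dist u v) \<le> lam i * ((F i u - F i v) - (H i u - H i v))"
          using lam0 i by (intro mult_left_mono) auto
      qed
      also have "(\<Sum>i\<in>{1..n}. lam i * (2 * \<gamma> * dist u v)) = 2 * \<gamma> * dist u v"
        using lam1 by (simp add: sum_distrib_right[symmetric])
      finally have Dge: "D \<ge> 2 * \<gamma> * dist u v" .
      have "\<bar>D\<bar> / dist u v \<le> lipnorm (\<lambda>x. g x - h x)"
        unfolding D_def g_def h_def
        by (rule lipnorm_ge[of _ 2]) (use comb_lip(2)[OF lam0 lam1 FL HL] Auv(1) in auto)
      moreover have "2 * \<gamma> \<le> \<bar>D\<bar> / dist u v" using Dge duv by (simp add: le_divide_eq)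
      ultimately have "2 * \<gamma> \<le> lipnorm (\<lambda>x. g x - h x)" by linarith
      moreover have "lipnorm (\<lambda>x. g x - h x) \<in> X" unfolding X_def using gG hG by blast
      ultimately show ?thesis by blast
    qed
    have Xne: "X \<noteq> {}" using key[of "(\<gamma>0 + 1) / 2"] g0 by auto
    have Xbdd: "bdd_above X" using Xle unfolding bdd_above_def by blast
    have up: "Sup X \<le> 2" by (rule cSup_least[OF Xne]) (use Xle in auto)
    have low: "2 \<le> Sup X"
    proof (rule ccontr)
      assume "\<not> 2 \<le> Sup X"
      then have s: "Sup X < 2" by simp
      define \<gamma> where "\<gamma> = max ((1 + \<gamma>0) / 2) ((1 + Sup X / 2) / 2)"
      have m1: "\<gamma>0 < (1 + \<gamma>0) / 2" using g0 by (simp add: field_simps)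
      have m2: "(1 + \<gamma>0) / 2 < 1" using g0 by (simp add: field_simps)
      have m3: "(1 + Sup X / 2) / 2 < 1" using s by (simp add: field_simps)
      have m4: "Sup X < 2 * ((1 + Sup X / 2) / 2)" using s by (simp add: field_simps)
      have "\<gamma>0 < \<gamma>" unfolding \<gamma>_def using m1 by (simp add: less_max_iff_disj)
      moreover have "\<gamma> < 1" unfolding \<gamma>_def using m2 m3 by simp
      ultimately obtain v where v: "v \<in> X" "v \<ge> 2 * \<gamma>" using key by blast
      have "v \<le> Sup X" by (rule cSup_upper[OF v(1) Xbdd])
      moreover have "(1 + Sup X / 2) / 2 \<le> \<gamma>" unfolding \<gamma>_def by simp
      then have "2 * ((1 + Sup X / 2) / 2) \<le> 2 * \<gamma>" by simp
      then have "2 * \<gamma> > Sup X" using m4 by linarith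
      ultimately show False using v(2) by linarith
    qed
    have "Sup X = 2" using up low by simp
    then show ?thesis unfolding lip_diam_def X_def G_def .
  qed
qed

theorem proposition3p5:
  fixes z0 :: "'a::metric_space"
  shows "SD2P z0 \<longleftrightarrow>
    (\<forall>n::nat. n \<ge> 1 \<longrightarrow>
      (\<forall>\<mu> :: nat \<Rightarrow> ('a \<times> 'a) set \<Rightarrow> real.
        (\<forall>i\<in>{1..n}. is_ba (\<mu> i) \<and> optimal z0 (\<mu> i) \<and> ba_norm (\<mu> i) = 1) \<longrightarrow>
        (\<forall>\<gamma>::real. 0 < \<gamma> \<and> \<gamma> < 1 \<longrightarrow>
          (\<exists>(A :: nat \<Rightarrow> ('a \<times> 'a) set) u v. u \<noteq> v \<and>
             (\<forall>i\<in>{1..n}. A i \<subseteq> offdiag \<and> \<mu> i (A i) \<ge> \<gamma> \<and>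
                cyc_mono \<gamma> (A i \<union> {(u, v)}) \<and> cyc_mono \<gamma> (A i \<union> {(v, u)}))))))"
proof
  assume sd: "SD2P z0"
  show "\<forall>n::nat. n \<ge> 1 \<longrightarrow>
      (\<forall>\<mu> :: nat \<Rightarrow> ('a \<times> 'a) set \<Rightarrow> real.
        (\<forall>i\<in>{1..n}. is_ba (\<mu> i) \<and> optimal z0 (\<mu> i) \<and> ba_norm (\<mu> i) = 1) \<longrightarrow>
        (\<forall>\<gamma>::real. 0 < \<gamma> \<and> \<gamma> < 1 \<longrightarrow>
          (\<exists>(A :: nat \<Rightarrow> ('a \<times> 'a) set) u v. u \<noteq> v \<and>
             (\<forall>i\<in>{1..n}. A i \<subseteq> offdiag \<and> \<mu> i (A i) \<ge> \<gamma> \<and>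
                cyc_mono \<gamma> (A i \<union> {(u, v)}) \<and> cyc_mono \<gamma> (A i \<union> {(v, u)})))))"
  proof (intro allI impI)
    fix n :: nat and \<mu> :: "nat \<Rightarrow> ('a \<times> 'a) set \<Rightarrow> real" and \<gamma> :: real
    assume n: "n \<ge> 1" and mu: "\<forall>i\<in>{1..n}. is_ba (\<mu> i) \<and> optimal z0 (\<mu> i) \<and> ba_norm (\<mu> i) = 1"
      and g: "0 < \<gamma> \<and> \<gamma> < 1"
    show "\<exists>(A :: nat \<Rightarrow> ('a \<times> 'a) set) u v. u \<noteq> v \<and>
             (\<forall>i\<in>{1..n}. A i \<subseteq> offdiag \<and> \<mu> i (A i) \<ge> \<gamma> \<and>
                cyc_mono \<gamma> (A i \<union> {(u, v)}) \<and> cyc_mono \<gamma> (A i \<union> {(v, u)}))"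
      using g by (intro dir1[OF sd n mu]) auto
  qed
next
  assume R: "\<forall>n::nat. n \<ge> 1 \<longrightarrow>
      (\<forall>\<mu> :: nat \<Rightarrow> ('a \<times> 'a) set \<Rightarrow> real.
        (\<forall>i\<in>{1..n}. is_ba (\<mu> i) \<and> optimal z0 (\<mu> i) \<and> ba_norm (\<mu> i) = 1) \<longrightarrow>
        (\<forall>\<gamma>::real. 0 < \<gamma> \<and> \<gamma> < 1 \<longrightarrow>
          (\<exists>(A :: nat \<Rightarrow> ('a \<times> 'a) set) u v. u \<noteq> v \<and>
             (\<forall>i\<in>{1..n}. A i \<subseteq> offdiag \<and> \<mu> i (A i) \<ge> \<gamma> \<and>
                cyc_mono \<gamma> (A i \<union> {(u, v)}) \<and> cyc_mono \<gamma> (A i \<union> {(v, u)})))))"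
  show "SD2P z0" by (rule dir2[OF R])
qed

end
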